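(* Let $1<p<q<\infty$ and $\alpha>0$. Then $$L^{q),\alpha}(\Omega)=\bigl(L^{p),\alpha}(\Omega),\,L^{q}(\Omega)\bigr)_{1,\infty;-\frac{\alpha}{q}},$$ that is, the two spaces coincide as sets and their norms are equivalent. Equivalently, there is a constant $c\ge 1$ such that for every measurable $f$ on $\Omega$, $$c^{-1}\|f\|_{q),\alpha}\le \sup_{0<t<1}t^{-1}(1-\log t)^{-\alpha/q}K\bigl(f,t;L^{p),\alpha},L^q\bigr)\le c\,\|f\|_{q),\alpha}.$$
   Context: $\Omega\subset\mathbb R^n$ is a bounded open set with Lebesgue measure $|\Omega|=1$. For a measurable $f:\Omega\to\mathbb R$, $f_*$ denotes the decreasing rearrangement of $|f|$ on $(0,1)$, i.e. the generalized inverse of the distribution function $D_f(\lambda)=|\{x\in\Omega:|f(x)|>\lambda\}|$. $\log$ is the natural logarithm. Grand Lebesgue space: for $1<p<\infty$ and $\alpha>0$, $L^{p),\alpha}(\Omega)$ is the set of measurable $f$ with $$\|f\|_{p),\alpha}=\sup_{0<t<1}(1-\log t)^{-\alpha/p}\Bigl(\int_t^1 f_*(\sigma)^p\,d\sigma\Bigr)^{1/p}<\infty .$$ K-functional: for Banach spaces $X_0,X_1$ continuously embedded in a common Hausdorff topological vector space, $g\in X_0+X_1$ and $t>0$, $$K(g,t;X_0,X_1)=\inf_{g=g_0+g_1,\ g_i\in X_i}\bigl(\|g_0\|_{X_0}+t\|g_1\|_{X_1}\bigr).$$ Interpolation spaces (with the K-functional only used on $(0,1)$): for $0\le\theta\le1$,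 $1\le r\le\infty$, $\gamma\in\mathbb R$, $(X_0,X_1)_{\theta,r;\gamma}$ is the set of $g\in X_0+X_1$ with $$\|g\|_{\theta,r;\gamma}=\Bigl(\int_0^1\bigl[t^{-\theta}(1-\log t)^{\gamma}K(g,t;X_0,X_1)\bigr]^r\frac{dt}{t}\Bigr)^{1/r}<\infty,$$ with the usual modification $\|g\|_{\theta,\infty;\gamma}=\sup_{0<t<1}t^{-\theta}(1-\log t)^{\gamma}K(g,t;X_0,X_1)$ when $r=\infty$. *)

theory Defs
  imports "HOL-Analysis.Analysis"
begin

definition distr_fun :: "'a::euclidean_space set \<Rightarrow> ('a \<Rightarrow> real) \<Rightarrow> real \<Rightarrow> real" where
  "distr_fun \<Omega> f lam = measure lebesgue {x \<in> \<Omega>. \<bar>f x\<bar> > lam}"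

definition drearr :: "'a::euclidean_space set \<Rightarrow> ('a \<Rightarrow> real) \<Rightarrow> real \<Rightarrow> real" where
  "drearr \<Omega> f s = Inf {lam. 0 \<le> lam \<and> distr_fun \<Omega> f lam \<le> s}"

text \<open>Grand Lebesgue norm (value \<infinity> allowed).  For 0 < t < 1 the rearrangement is
  bounded and monotone on [t,1], so the inner integral is a genuine finite integral.\<close>
definition grand_norm :: "'a::euclidean_space set \<Rightarrow> real \<Rightarrow> real \<Rightarrow> ('a \<Rightarrow> real) \<Rightarrow> ennreal" where
  "grand_norm \<Omega> p \<alpha> f =
     (SUP t\<in>{0<..<1}. ennreal ((1 - ln t) powr (- \<alpha> / p) *
        (LBINT s=t..1. (drearr \<Omega> f s) powr p) powr (1 / p)))"

definition Lq_norm :: "'a::euclidean_space set \<Rightarrow> real \<Rightarrow> ('a \<Rightarrow> real) \<Rightarrow> ennreal" where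
  "Lq_norm \<Omega> q f =
     (if integrable (lebesgue_on \<Omega>) (\<lambda>x. \<bar>f x\<bar> powr q)
      then ennreal ((\<integral>x. \<bar>f x\<bar> powr q \<partial>lebesgue_on \<Omega>) powr (1 / q))
      else \<infinity>)"

text \<open>K-functional for two (extended-valued) function norms on measurable functions on Omega;
  decompositions outside X0 or X1 have infinite cost, so the infimum runs over X0 + X1
  (and is \<infinity> if g is not in X0 + X1).\<close>
definition K_fun :: "'a::euclidean_space set \<Rightarrow> (('a \<Rightarrow> real) \<Rightarrow> ennreal) \<Rightarrow> (('a \<Rightarrow> real) \<Rightarrow> ennreal)
    \<Rightarrow> ('a \<Rightarrow> real) \<Rightarrow> real \<Rightarrow> ennreal" where
  "K_fun \<Omega> N0 N1 g t =
     (INF gs\<in>{(g0, g1). g0 \<in> borel_measurable (lebesgue_on \<Omega>) \<and> g1 \<in> borel_measurable (lebesgue_on \<Omega>)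
                     \<and> (\<forall>x\<in>\<Omega>. g x = g0 x + g1 x)}.
        N0 (fst gs) + ennreal t * N1 (snd gs))"

definition interp_norm_inf :: "real \<Rightarrow> real \<Rightarrow> (real \<Rightarrow> ennreal) \<Rightarrow> ennreal" where
  "interp_norm_inf \<theta> \<gamma> K = (SUP t\<in>{0<..<1}. ennreal (t powr (- \<theta>) * (1 - ln t) powr \<gamma>) * K t)"

end

theory Submission
  imports Defs "HOL-Probability.Distribution_Functions"
begin

definition Dm :: "'b measure \<Rightarrow> ('b \<Rightarrow> real) \<Rightarrow> real \<Rightarrow> real" where
  "Dm M h lam = measure M {x\<in>space M. \<bar>h x\<bar> > lam}"

definition rr :: "'b measure \<Rightarrow> ('b \<Rightarrow> real) \<Rightarrow> real \<Rightarrow> real" where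
  "rr M h s = Inf {lam. 0 \<le> lam \<and> Dm M h lam \<le> s}"

context prob_space
begin

lemma Dm_sets: "(h::_\<Rightarrow>real) \<in> borel_measurable M \<Longrightarrow> {x\<in>space M. \<bar>h x\<bar> > lam} \<in> sets M"
  using borel_measurable_abs[of h M] by (simp add: borel_measurable_iff_greater)

lemma Dm_antimono: "h \<in> borel_measurable M \<Longrightarrow> l1 \<le> l2 \<Longrightarrow> Dm M h l2 \<le> Dm M h l1"
  unfolding Dm_def by (intro finite_measure_mono) (auto intro: Dm_sets)

lemma Dm_nonneg: "0 \<le> Dm M h l" unfolding Dm_def by simp
lemma Dm_le1: "Dm M h l \<le> 1" unfolding Dm_def by simp

lemma Dm_neg: "h \<in> borel_measurable M \<Longrightarrow> l < 0 \<Longrightarrow> Dm M h l = 1"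
proof -
  assume "l < 0"
  then have "{x\<in>space M. \<bar>h x\<bar> > l} = space M" by auto
  then show ?thesis unfolding Dm_def by (simp add: prob_space)
qed

lemma Dm_right_closed:
  assumes h: "h \<in> borel_measurable M" and le: "\<And>l. l0 < l \<Longrightarrow> Dm M h l \<le> s"
  shows "Dm M h l0 \<le> s"
proof -
  define A where "A n = {x\<in>space M. \<bar>h x\<bar> > l0 + 1 / (Suc n)}" for n :: nat
  have A: "range A \<subseteq> sets M" unfolding A_def using h by (auto intro: Dm_sets)
  have inc: "incseq A"
  proof (rule incseq_SucI)
    fix n
    have "l0 + 1 / real (Suc (Suc n)) \<le> l0 + 1 / real (Suc n)"
      by (simp add: frac_le)
    then show "A n \<subseteq> A (Suc n)" unfolding A_def by auto
  qed
  have un: "(\<Union>i. A i) = {x\<in>space M. \<bar>h x\<bar> > l0}"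
  proof safe
    fix x i assume "x \<in> A i"
    then have 1: "x \<in> space M" "l0 + 1 / real (Suc i) < \<bar>h x\<bar>" unfolding A_def by auto
    have "0 < 1 / real (Suc i)" by simp
    then show "x \<in> space M" "l0 < \<bar>h x\<bar>" using 1 by linarith+
  next
    fix x assume "x \<in> space M" "l0 < \<bar>h x\<bar>"
    then have "0 < \<bar>h x\<bar> - l0" by simp
    then obtain n :: nat where "1 / real (Suc n) < \<bar>h x\<bar> - l0"
      by (rule nat_approx_posE)
    then have "x \<in> A n" unfolding A_def using \<open>x \<in> space M\<close> by auto
    then show "x \<in> (\<Union>i. A i)" by blast
  qed
  have lim: "(\<lambda>i. measure M (A i)) \<longlonglongrightarrow> Dm M h l0"
    using finite_Lim_measure_incseq[OF A inc] un unfolding Dm_def by simp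
  have "\<And>n. measure M (A n) \<le> s"
    unfolding A_def using le[of "l0 + 1 / real (Suc n)" for n] unfolding Dm_def by simp
  then show ?thesis using lim by (meson LIMSEQ_le_const2)
qed

lemma Dm_small:
  assumes h: "h \<in> borel_measurable M" and s: "0 < s"
  shows "\<exists>l\<ge>0. Dm M h l \<le> s"
proof -
  define A where "A n = {x\<in>space M. \<bar>h x\<bar> > real n}" for n :: nat
  have A: "range A \<subseteq> sets M" unfolding A_def using h by (auto intro: Dm_sets)
  have dec: "decseq A"
  proof (rule decseq_SucI)
    fix n show "A (Suc n) \<subseteq> A n" unfolding A_def by auto
  qed
  have int: "(\<Inter>i. A i) = {}"
  proof (rule equals0I)
    fix x assume x: "x \<in> (\<Inter>i. A i)"
    obtain n :: nat where n: "\<bar>h x\<bar> \<le> real n" using real_arch_simple by blast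
    have "x \<in> A n" using x by blast
    then have "real n < \<bar>h x\<bar>" unfolding A_def by simp
    then show False using n by linarith
  qed
  have lim: "(\<lambda>i. measure M (A i)) \<longlonglongrightarrow> 0"
    using finite_Lim_measure_decseq[OF A dec] int by simp
  from order_tendstoD(2)[OF lim s] obtain N where "\<forall>n\<ge>N. measure M (A n) < s"
    by (auto simp: eventually_sequentially)
  then have "measure M (A N) < s" by blast
  then have "Dm M h (real N) \<le> s" unfolding A_def Dm_def by simp
  then show ?thesis by (intro exI[of _ "real N"]) simp
qed

lemma rr_basic:
  assumes h: "h \<in> borel_measurable M" and s: "0 < s"
  shows "0 \<le> rr M h s" "Dm M h (rr M h s) \<le> s"
proof -
  let ?S = "{lam. 0 \<le> lam \<and> Dm M h lam \<le> s}"
  have ne: "?S \<noteq> {}" using Dm_small[OF h s] by auto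
  have bdd: "bdd_below ?S" by (auto intro: bdd_belowI[of _ 0])
  show "0 \<le> rr M h s" unfolding rr_def using ne by (intro cInf_greatest) auto
  show "Dm M h (rr M h s) \<le> s"
  proof (rule Dm_right_closed[OF h])
    fix l assume "rr M h s < l"
    then obtain l' where "l' \<in> ?S" "l' < l" unfolding rr_def using cInf_lessD[OF ne] by blast
    then show "Dm M h l \<le> s" using Dm_antimono[OF h, of l' l] by auto
  qed
qed

lemma rr_le: "0 \<le> l \<Longrightarrow> Dm M h l \<le> s \<Longrightarrow> rr M h s \<le> l"
  unfolding rr_def by (rule cInf_lower) (auto intro: bdd_belowI[of _ 0])

lemma rr_gt_iff:
  assumes h: "h \<in> borel_measurable M" and s: "0 < s" and l: "0 \<le> l"
  shows "l < rr M h s \<longleftrightarrow> s < Dm M h l"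
proof
  assume "l < rr M h s" then show "s < Dm M h l" using rr_le[OF l, of h s] by linarith
next
  assume "s < Dm M h l"
  show "l < rr M h s"
  proof (rule ccontr)
    assume "\<not> l < rr M h s"
    then have "Dm M h l \<le> Dm M h (rr M h s)" by (intro Dm_antimono[OF h]) auto
    then show False using rr_basic[OF h s] \<open>s < Dm M h l\<close> by linarith
  qed
qed

lemma rr_antimono:
  assumes h: "h \<in> borel_measurable M" and "0 < s1" "s1 \<le> s2"
  shows "rr M h s2 \<le> rr M h s1"
  using rr_basic[OF h, of s1] assms by (intro rr_le) auto

lemma rr_ge1: assumes "1 \<le> s" "h \<in> borel_measurable M" shows "rr M h s = 0"
  using rr_le[of 0 h s] rr_basic[of h s] assms Dm_le1[of h 0] by auto

lemma rr_mono_D: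
  assumes h1: "h1 \<in> borel_measurable M" and h2: "h2 \<in> borel_measurable M" and s: "0 < s"
    and D: "\<And>l. 0 \<le> l \<Longrightarrow> Dm M h1 l \<le> Dm M h2 l"
  shows "rr M h1 s \<le> rr M h2 s"
  using rr_basic[OF h2 s] D[of "rr M h2 s"] by (intro rr_le) auto

lemma rr_sub:
  assumes f: "f \<in> borel_measurable M" and g0: "g0 \<in> borel_measurable M"
    and g1: "g1 \<in> borel_measurable M" and s: "0 < s"
    and le: "\<And>x. x \<in> space M \<Longrightarrow> \<bar>f x\<bar> \<le> \<bar>g0 x\<bar> + \<bar>g1 x\<bar>"
  shows "rr M f s \<le> rr M g0 (s/2) + rr M g1 (s/2)"
proof -
  let ?a = "rr M g0 (s/2)" and ?b = "rr M g1 (s/2)"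
  have a: "0 \<le> ?a" "Dm M g0 ?a \<le> s/2" using rr_basic[OF g0, of "s/2"] s by auto
  have b: "0 \<le> ?b" "Dm M g1 ?b \<le> s/2" using rr_basic[OF g1, of "s/2"] s by auto
  have sub: "{x\<in>space M. \<bar>f x\<bar> > ?a + ?b} \<subseteq> {x\<in>space M. \<bar>g0 x\<bar> > ?a} \<union> {x\<in>space M. \<bar>g1 x\<bar> > ?b}"
    using le by fastforce
  have "Dm M f (?a + ?b) \<le> measure M ({x\<in>space M. \<bar>g0 x\<bar> > ?a} \<union> {x\<in>space M. \<bar>g1 x\<bar> > ?b})"
    unfolding Dm_def using sub by (intro finite_measure_mono) (auto intro: Dm_sets g0 g1)
  also have "\<dots> \<le> Dm M g0 ?a + Dm M g1 ?b"
    unfolding Dm_def by (intro measure_Un_le) (auto intro: Dm_sets g0 g1)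
  finally have "Dm M f (?a + ?b) \<le> s" using a b by linarith
  then show ?thesis using a b by (intro rr_le) auto
qed

end

definition rrz :: "'b measure \<Rightarrow> ('b \<Rightarrow> real) \<Rightarrow> real \<Rightarrow> real" where
  "rrz M h s = (if 0 < s then rr M h s else 0)"

definition U01 :: "real measure" where "U01 = restrict_space lborel {0<..<1}"

lemma U01_prob: "prob_space U01"
  unfolding U01_def by (rule prob_spaceI) (simp add: emeasure_restrict_space)

lemma space_U01: "space U01 = {0<..<1}" unfolding U01_def by simp

context prob_space
begin

lemma rrz_nonneg: "h \<in> borel_measurable M \<Longrightarrow> 0 \<le> rrz M h s"
  unfolding rrz_def using rr_basic(1)[of h s] by auto

lemma rrz_meas:
  assumes h: "h \<in> borel_measurable M"
  shows "rrz M h \<in> borel_measurable borel"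
  unfolding borel_measurable_iff_greater
proof
  fix a :: real
  show "{w \<in> space borel. a < rrz M h w} \<in> sets borel"
  proof (cases "a < 0")
    case True
    then have "{w \<in> space borel. a < rrz M h w} = UNIV" using rrz_nonneg[OF h]
      by (auto intro: less_le_trans)
    then show ?thesis by simp
  next
    case False
    have "{w \<in> space borel. a < rrz M h w} = {0<..<Dm M h a}"
      using False rr_gt_iff[OF h, of _ a] unfolding rrz_def by auto
    then show ?thesis by simp
  qed
qed

lemma cdf_abs:
  assumes h: "h \<in> borel_measurable M"
  shows "cdf (distr M borel (\<lambda>x. \<bar>h x\<bar>)) l = 1 - Dm M h l"
proof -
  have m: "(\<lambda>x. \<bar>h x\<bar>) \<in> borel_measurable M" using h by simp
  have "cdf (distr M borel (\<lambda>x. \<bar>h x\<bar>)) l = measure M ((\<lambda>x. \<bar>h x\<bar>) -` {..l} \<inter> space M)"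
    unfolding cdf_def by (rule measure_distr[OF m]) simp
  also have "(\<lambda>x. \<bar>h x\<bar>) -` {..l} \<inter> space M = space M - {x\<in>space M. \<bar>h x\<bar> > l}" by auto
  also have "measure M \<dots> = 1 - Dm M h l" unfolding Dm_def
    by (rule prob_compl) (rule Dm_sets[OF h])
  finally show ?thesis .
qed

lemma cdf_rrz:
  assumes h: "h \<in> borel_measurable M"
  shows "cdf (distr U01 borel (rrz M h)) l = 1 - Dm M h l"
proof -
  have m: "rrz M h \<in> borel_measurable U01"
    unfolding U01_def by (rule measurable_restrict_space1) (simp add: rrz_meas[OF h])
  have "cdf (distr U01 borel (rrz M h)) l = measure U01 (rrz M h -` {..l} \<inter> space U01)"
    unfolding cdf_def by (rule measure_distr[OF m]) simp
  also have "\<dots> = measure lborel (rrz M h -` {..l} \<inter> {0<..<1})"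
    unfolding U01_def by (subst measure_restrict_space) auto
  also have "\<dots> = 1 - Dm M h l"
  proof (cases "l < 0")
    case True
    have "\<And>x. rrz M h x \<le> l \<Longrightarrow> False" using rrz_nonneg[OF h] True
      by (meson le_less_trans not_less)
    then have "rrz M h -` {..l} \<inter> {0<..<1} = {}" by auto
    then show ?thesis using Dm_neg[OF h True] by simp
  next
    case False
    have "rrz M h -` {..l} \<inter> {0<..<1} = {s. 0 < s \<and> s < 1 \<and> Dm M h l \<le> s}"
      using rr_gt_iff[OF h, of _ l] False unfolding rrz_def by (auto simp: not_less[symmetric])
    also have "\<dots> = (if Dm M h l = 0 then {0<..<1} else {Dm M h l..<1})"
      using Dm_nonneg[of h l] by auto
    finally show ?thesis using Dm_le1[of h l] Dm_nonneg[of h l] by simp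
  qed
  finally show ?thesis .
qed

lemma equimeas:
  assumes h: "h \<in> borel_measurable M" and g: "g \<in> borel_measurable borel"
  shows "(\<integral>\<^sup>+x. g \<bar>h x\<bar> \<partial>M) = (\<integral>\<^sup>+s. g (rrz M h s) * indicator {0<..<1} s \<partial>lborel)"
proof -
  have m: "(\<lambda>x. \<bar>h x\<bar>) \<in> borel_measurable M" using h by simp
  have mU: "rrz M h \<in> borel_measurable U01"
    unfolding U01_def by (rule measurable_restrict_space1) (simp add: rrz_meas[OF h])
  have eq: "distr M borel (\<lambda>x. \<bar>h x\<bar>) = distr U01 borel (rrz M h)"
  proof (rule cdf_unique)
    show "real_distribution (distr M borel (\<lambda>x. \<bar>h x\<bar>))" using m by simp
    show "real_distribution (distr U01 borel (rrz M h))"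
      using prob_space.real_distribution_distr[OF U01_prob mU] .
    show "cdf (distr M borel (\<lambda>x. \<bar>h x\<bar>)) = cdf (distr U01 borel (rrz M h))"
      using cdf_abs[OF h] cdf_rrz[OF h] by auto
  qed
  have "(\<integral>\<^sup>+x. g \<bar>h x\<bar> \<partial>M) = (\<integral>\<^sup>+y. g y \<partial>distr M borel (\<lambda>x. \<bar>h x\<bar>))"
    by (rule nn_integral_distr[symmetric]) (auto simp: m g)
  also have "\<dots> = (\<integral>\<^sup>+y. g y \<partial>distr U01 borel (rrz M h))" by (simp add: eq)
  also have "\<dots> = (\<integral>\<^sup>+s. g (rrz M h s) \<partial>U01)"
    by (rule nn_integral_distr) (auto simp: mU g)
  also have "\<dots> = (\<integral>\<^sup>+s. g (rrz M h s) * indicator {0<..<1} s \<partial>lborel)"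
    unfolding U01_def by (rule nn_integral_restrict_space) simp
  finally show ?thesis .
qed

end

lemma nni_mono:
  fixes F G :: "real \<Rightarrow> real" and a b c a' b' :: real
  assumes "\<And>s. a < s \<Longrightarrow> s \<le> b \<Longrightarrow> F s \<le> G s"
  shows "(\<integral>\<^sup>+s. ennreal (F s) * indicator {a<..b} s \<partial>lborel) \<le> (\<integral>\<^sup>+s. ennreal (G s) * indicator {a<..b} s \<partial>lborel)"
  using assms by (intro nn_integral_mono) (auto simp: indicator_def ennreal_leI)

lemma nni_const:
  fixes F G :: "real \<Rightarrow> real" and a b c a' b' :: real
  assumes "a \<le> b" "0 \<le> c"
  shows "(\<integral>\<^sup>+s. ennreal c * indicator {a<..b} s \<partial>lborel) = ennreal (c * (b - a))"
  using assms by (simp add: nn_integral_cmult_indicator ennreal_mult)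

lemma nni_sub_interval:
  fixes F G :: "real \<Rightarrow> real" and a b c a' b' :: real
  assumes "a' \<le> a" "b \<le> b'"
  shows "(\<integral>\<^sup>+s. ennreal (F s) * indicator {a<..b} s \<partial>lborel) \<le> (\<integral>\<^sup>+s. ennreal (F s) * indicator {a'<..b'} s \<partial>lborel)"
proof (intro nn_integral_mono)
  fix x
  have "{a<..b} \<subseteq> {a'<..b'}" using assms by auto
  then have "indicator {a<..b} x \<le> (indicator {a'<..b'} x :: ennreal)"
    by (simp add: indicator_def subset_iff)
  then show "ennreal (F x) * indicator {a<..b} x \<le> ennreal (F x) * indicator {a'<..b'} x"
    by (rule mult_left_mono) simp
qed

lemma nni_add:
  fixes F G :: "real \<Rightarrow> real" and a b c a' b' :: real
  assumes A: "A \<in> sets borel" and "F \<in> borel_measurable borel" "G \<in> borel_measurable borel" "\<And>s. 0 \<le> F s" "\<And>s. 0 \<le> G s"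
  shows "(\<integral>\<^sup>+s. ennreal (F s + G s) * indicator A s \<partial>lborel) = 
     (\<integral>\<^sup>+s. ennreal (F s) * indicator A s \<partial>lborel) + (\<integral>\<^sup>+s. ennreal (G s) * indicator A s \<partial>lborel)"
proof -
  have "(\<integral>\<^sup>+s. ennreal (F s + G s) * indicator A s \<partial>lborel) = 
     (\<integral>\<^sup>+s. ennreal (F s) * indicator A s + ennreal (G s) * indicator A s \<partial>lborel)"
    using assms by (intro nn_integral_cong) (simp add: ennreal_plus distrib_right)
  also have "\<dots> = (\<integral>\<^sup>+s. ennreal (F s) * indicator A s \<partial>lborel) + (\<integral>\<^sup>+s. ennreal (G s) * indicator A s \<partial>lborel)"
    using assms by (intro nn_integral_add) (auto intro!: borel_measurable_times_ennreal)
  finally show ?thesis .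
qed

lemma nni_split:
  fixes F G :: "real \<Rightarrow> real" and a b c a' b' :: real
  assumes F: "F \<in> borel_measurable borel" and "a \<le> b" "b \<le> c"
  shows "(\<integral>\<^sup>+s. ennreal (F s) * indicator {a<..c} s \<partial>lborel) = 
     (\<integral>\<^sup>+s. ennreal (F s) * indicator {a<..b} s \<partial>lborel) + (\<integral>\<^sup>+s. ennreal (F s) * indicator {b<..c} s \<partial>lborel)"
proof -
  have "(\<integral>\<^sup>+s. ennreal (F s) * indicator {a<..c} s \<partial>lborel) = 
     (\<integral>\<^sup>+s. ennreal (F s) * indicator {a<..b} s + ennreal (F s) * indicator {b<..c} s \<partial>lborel)"
  proof (intro nn_integral_cong)
    fix x
    have u: "{a<..c} = {a<..b} \<union> {b<..c}" "{a<..b} \<inter> {b<..c} = {}" using assms by auto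
    show "ennreal (F x) * indicator {a<..c} x = ennreal (F x) * indicator {a<..b} x + ennreal (F x) * indicator {b<..c} x"
      unfolding u(1) indicator_def using u(2) by (auto simp: disjoint_iff)
  qed
  also have "\<dots> = (\<integral>\<^sup>+s. ennreal (F s) * indicator {a<..b} s \<partial>lborel) + (\<integral>\<^sup>+s. ennreal (F s) * indicator {b<..c} s \<partial>lborel)"
    using F by (intro nn_integral_add) auto
  finally show ?thesis .
qed

lemma nni_scale:
  fixes F :: "real \<Rightarrow> real" and a b :: real
  assumes F: "F \<in> borel_measurable borel"
  shows "(\<integral>\<^sup>+s. ennreal (F (s/2)) * indicator {a<..b} s \<partial>lborel) =
     2 * (\<integral>\<^sup>+s. ennreal (F s) * indicator {a/2<..b/2} s \<partial>lborel)"
proof -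
  have m: "(\<lambda>s. ennreal (F (s/2)) * indicator {a<..b} s) \<in> borel_measurable borel"
    using F by measurable
  have "(\<integral>\<^sup>+s. ennreal (F (s/2)) * indicator {a<..b} s \<partial>lborel) =
     ennreal \<bar>2\<bar> * (\<integral>\<^sup>+s. ennreal (F ((0 + 2 * s)/2)) * indicator {a<..b} (0 + 2 * s) \<partial>lborel)"
    by (rule nn_integral_real_affine[OF m]) simp
  also have "\<dots> = 2 * (\<integral>\<^sup>+s. ennreal (F s) * indicator {a/2<..b/2} s \<partial>lborel)"
    by (auto intro!: nn_integral_cong arg_cong2[where f="(*)"] simp: indicator_def)
  finally show ?thesis .
qed

lemma nni_LB:
  fixes F G :: "real \<Rightarrow> real" and t C :: real
  assumes F: "F \<in> borel_measurable borel" and t: "t \<le> 1"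
    and eq: "\<And>s. t \<le> s \<Longrightarrow> s \<le> 1 \<Longrightarrow> G s = F s"
    and nn: "\<And>s. t \<le> s \<Longrightarrow> s \<le> 1 \<Longrightarrow> 0 \<le> F s"
    and bd: "\<And>s. t \<le> s \<Longrightarrow> s \<le> 1 \<Longrightarrow> F s \<le> C"
  shows "(\<integral>\<^sup>+s. ennreal (F s) * indicator {t<..1} s \<partial>lborel) = ennreal (LBINT s=t..1. G s)"
    "(\<integral>\<^sup>+s. ennreal (F s) * indicator {t<..1} s \<partial>lborel) < \<infinity>"
    "0 \<le> (LBINT s=t..1. G s)"
proof -
  have C: "0 \<le> C" using nn[of 1] bd[of 1] t by auto
  have m: "(\<lambda>s. indicator {t..1} s * F s) \<in> borel_measurable lborel" using F by measurable
  have e1: "(\<integral>\<^sup>+s. ennreal (F s) * indicator {t<..1} s \<partial>lborel) = (\<integral>\<^sup>+s. ennreal (indicator {t..1} s * F s) \<partial>lborel)"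
  proof (rule nn_integral_cong_AE)
    have "AE s in lborel. s \<noteq> t" by (rule AE_lborel_singleton)
    then show "AE s in lborel. ennreal (F s) * indicator {t<..1} s = ennreal (indicator {t..1} s * F s)"
      by eventually_elim (auto simp: indicator_def)
  qed
  have fin: "(\<integral>\<^sup>+s. ennreal (indicator {t..1} s * F s) \<partial>lborel) \<le> ennreal (C * (1 - t))"
  proof -
    have "(\<integral>\<^sup>+s. ennreal (indicator {t..1} s * F s) \<partial>lborel) \<le> (\<integral>\<^sup>+s. ennreal C * indicator {t..1} s \<partial>lborel)"
      using bd by (intro nn_integral_mono) (auto simp: indicator_def intro!: ennreal_leI)
    also have "\<dots> = ennreal (C * (1 - t))" using C t by (simp add: nn_integral_cmult_indicator ennreal_mult)
    finally show ?thesis .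
  qed
  have int: "integrable lborel (\<lambda>s. indicator {t..1} s * F s)"
    proof (rule integrableI_nonneg[OF m])
    show "AE x in lborel. 0 \<le> indicator {t..1} x * F x" by (auto simp: indicator_def nn)
    show "(\<integral>\<^sup>+s. ennreal (indicator {t..1} s * F s) \<partial>lborel) < \<infinity>"
      using fin by (simp add: le_less_trans)
  qed
  have "0 \<le> (\<integral>s. indicator {t..1} s * F s \<partial>lborel)"
    by (intro integral_nonneg_AE) (auto simp: indicator_def nn)
  have "(\<integral>\<^sup>+s. ennreal (indicator {t..1} s * F s) \<partial>lborel) = ennreal (\<integral>s. indicator {t..1} s * F s \<partial>lborel)"
    by (rule nn_integral_eq_integral[OF int]) (auto simp: indicator_def nn)
  moreover have I: "(\<integral>s. indicator {t..1} s * F s \<partial>lborel) = (LBINT s=t..1. G s)"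
  proof -
    have "(LBINT s=t..1. G s) = (LBINT s:{t..1}. G s)" using interval_integral_Icc[of t 1 G] t by (simp only: one_ereal_def)
    also have "\<dots> = (\<integral>s. indicator {t..1} s * F s \<partial>lborel)"
      unfolding set_lebesgue_integral_def by (intro Bochner_Integration.integral_cong) (auto simp: indicator_def eq)
    finally show ?thesis by simp
  qed
  ultimately show "(\<integral>\<^sup>+s. ennreal (F s) * indicator {t<..1} s \<partial>lborel) = ennreal (LBINT s=t..1. G s)"
    using e1 by simp
  show "0 \<le> (LBINT s=t..1. G s)" using I \<open>0 \<le> (\<integral>s. indicator {t..1} s * F s \<partial>lborel)\<close> by simp
  show "(\<integral>\<^sup>+s. ennreal (F s) * indicator {t<..1} s \<partial>lborel) < \<infinity>"
    using e1 fin by (simp add: le_less_trans)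
qed

definition Gn :: "'b measure \<Rightarrow> real \<Rightarrow> real \<Rightarrow> ('b \<Rightarrow> real) \<Rightarrow> ennreal" where
  "Gn M p \<alpha> h = (SUP t\<in>{0<..<1}. ennreal ((1 - ln t) powr (- \<alpha> / p) *
        (LBINT s=t..1. (rr M h s) powr p) powr (1 / p)))"

definition Lqn :: "'b measure \<Rightarrow> real \<Rightarrow> ('b \<Rightarrow> real) \<Rightarrow> ennreal" where
  "Lqn M q h = (if integrable M (\<lambda>x. \<bar>h x\<bar> powr q)
      then ennreal ((\<integral>x. \<bar>h x\<bar> powr q \<partial>M) powr (1 / q)) else \<infinity>)"

definition Kn :: "'b measure \<Rightarrow> (('b \<Rightarrow> real) \<Rightarrow> ennreal) \<Rightarrow> (('b \<Rightarrow> real) \<Rightarrow> ennreal)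
    \<Rightarrow> ('b \<Rightarrow> real) \<Rightarrow> real \<Rightarrow> ennreal" where
  "Kn M N0 N1 g t = (INF gs\<in>{(g0, g1). g0 \<in> borel_measurable M \<and> g1 \<in> borel_measurable M
                     \<and> (\<forall>x\<in>space M. g x = g0 x + g1 x)}. N0 (fst gs) + ennreal t * N1 (snd gs))"

lemma bridge:
  assumes "\<Omega> \<in> sets lebesgue"
  shows "drearr \<Omega> h = rr (lebesgue_on \<Omega>) h"
    "grand_norm \<Omega> p \<alpha> h = Gn (lebesgue_on \<Omega>) p \<alpha> h"
    "Lq_norm \<Omega> q h = Lqn (lebesgue_on \<Omega>) q h"
    "K_fun \<Omega> N0 N1 h t = Kn (lebesgue_on \<Omega>) N0 N1 h t"
proof -
  have d: "distr_fun \<Omega> h = Dm (lebesgue_on \<Omega>) h"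
    unfolding distr_fun_def Dm_def using assms by (auto intro!: ext measure_restrict_space[symmetric])
  show 1: "drearr \<Omega> h = rr (lebesgue_on \<Omega>) h" unfolding drearr_def rr_def d by (rule ext) simp
  show "grand_norm \<Omega> p \<alpha> h = Gn (lebesgue_on \<Omega>) p \<alpha> h" unfolding grand_norm_def Gn_def 1 ..
  show "Lq_norm \<Omega> q h = Lqn (lebesgue_on \<Omega>) q h" unfolding Lq_norm_def Lqn_def ..
  show "K_fun \<Omega> N0 N1 h t = Kn (lebesgue_on \<Omega>) N0 N1 h t" unfolding K_fun_def Kn_def using assms by simp
qed

context prob_space
begin

definition NI :: "('a \<Rightarrow> real) \<Rightarrow> real \<Rightarrow> real \<Rightarrow> real \<Rightarrow> ennreal" where
  "NI h r a b = (\<integral>\<^sup>+s. ennreal (rrz M h s powr r) * indicator {a<..b} s \<partial>lborel)"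

lemma rrz_pow_meas: "h \<in> borel_measurable M \<Longrightarrow> (\<lambda>s. rrz M h s powr r) \<in> borel_measurable borel"
  using rrz_meas[of h] by measurable

lemma NI_LB:
  assumes h: "h \<in> borel_measurable M" and t: "0 < t" "t \<le> 1" and r: "0 \<le> r"
  shows "NI h r t 1 = ennreal (LBINT s=t..1. rr M h s powr r)" "NI h r t 1 < \<infinity>"
    "0 \<le> (LBINT s=t..1. rr M h s powr r)"
proof -
  note L = nni_LB[OF rrz_pow_meas[OF h, of r] t(2), where G="\<lambda>s. rr M h s powr r" and C="rr M h t powr r"]
  have a: "\<And>s. t \<le> s \<Longrightarrow> s \<le> 1 \<Longrightarrow> rr M h s powr r = rrz M h s powr r" using t unfolding rrz_def by auto
  have b: "\<And>s. t \<le> s \<Longrightarrow> s \<le> 1 \<Longrightarrow> 0 \<le> rrz M h s powr r" by simp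
  have c: "\<And>s. t \<le> s \<Longrightarrow> s \<le> 1 \<Longrightarrow> rrz M h s powr r \<le> rr M h t powr r"
    using t rr_antimono[OF h] rr_basic(1)[OF h] unfolding rrz_def by (auto intro!: powr_mono2 r)
  show "NI h r t 1 = ennreal (LBINT s=t..1. rr M h s powr r)" "NI h r t 1 < \<infinity>"
    "0 \<le> (LBINT s=t..1. rr M h s powr r)"
    using L[OF a b c] unfolding NI_def by auto
qed

lemma Gn_le_D:
  assumes h: "h \<in> borel_measurable M" and G: "Gn M p \<alpha> h \<le> ennreal a" and a: "0 \<le> a"
    and t: "0 < t" "t < 1" and p: "0 < p"
  shows "NI h p t 1 \<le> ennreal (a powr p * (1 - ln t) powr \<alpha>)"
proof -
  let ?I = "LBINT s=t..1. rr M h s powr p"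
  have I: "NI h p t 1 = ennreal ?I" "0 \<le> ?I" using NI_LB[OF h, of t p] t p by auto
  have w: "1 \<le> 1 - ln t" using t by simp
  have "ennreal ((1 - ln t) powr (- \<alpha> / p) * ?I powr (1 / p)) \<le> Gn M p \<alpha> h"
    unfolding Gn_def using t by (intro SUP_upper) auto
  then have "(1 - ln t) powr (- \<alpha> / p) * ?I powr (1 / p) \<le> a" using G a
    by (metis ennreal_le_iff order.trans)
  then have "?I powr (1 / p) \<le> a * (1 - ln t) powr (\<alpha> / p)"
    using w by (simp add: powr_minus divide_simps mult.commute)
  then have "(?I powr (1 / p)) powr p \<le> (a * (1 - ln t) powr (\<alpha> / p)) powr p"
    using p by (intro powr_mono2) auto
  then have "?I \<le> a powr p * (1 - ln t) powr \<alpha>"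
    using p I(2) a w by (simp add: powr_powr powr_mult)
  then show ?thesis using I by (simp add: ennreal_leI)
qed

lemma Gn_le_I:
  assumes "\<And>t. 0 < t \<Longrightarrow> t < 1 \<Longrightarrow> (1 - ln t) powr (- \<alpha> / p) * (LBINT s=t..1. rr M h s powr p) powr (1 / p) \<le> c"
  shows "Gn M p \<alpha> h \<le> ennreal c"
  unfolding Gn_def using assms by (intro SUP_least) (auto intro: ennreal_leI)

lemma Lqn_le_I:
  assumes h: "h \<in> borel_measurable M" and q: "0 < q"
    and le: "(\<integral>\<^sup>+x. ennreal (\<bar>h x\<bar> powr q) \<partial>M) \<le> ennreal B" and B: "0 \<le> B"
  shows "Lqn M q h \<le> ennreal (B powr (1/q))"
proof -
  have m: "(\<lambda>x. \<bar>h x\<bar> powr q) \<in> borel_measurable M" using h by measurable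
  have int: "integrable M (\<lambda>x. \<bar>h x\<bar> powr q)"
    using le by (intro integrableI_nonneg[OF m]) (auto intro: le_less_trans)
  have "ennreal (\<integral>x. \<bar>h x\<bar> powr q \<partial>M) = (\<integral>\<^sup>+x. ennreal (\<bar>h x\<bar> powr q) \<partial>M)"
    by (rule nn_integral_eq_integral[OF int, symmetric]) auto
  then have "ennreal (\<integral>x. \<bar>h x\<bar> powr q \<partial>M) \<le> ennreal B" using le by simp
  then have "(\<integral>x. \<bar>h x\<bar> powr q \<partial>M) \<le> B" using ennreal_le_iff[OF B] by blast
  then show ?thesis unfolding Lqn_def using int q by (auto intro!: ennreal_leI powr_mono2)
qed

lemma Lqn_le_D:
  assumes h: "h \<in> borel_measurable M" and q: "0 < q" and L: "Lqn M q h \<le> ennreal B" and B: "0 \<le> B"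
  shows "(\<integral>\<^sup>+x. ennreal (\<bar>h x\<bar> powr q) \<partial>M) \<le> ennreal (B powr q)"
proof -
  have int: "integrable M (\<lambda>x. \<bar>h x\<bar> powr q)" using L unfolding Lqn_def by (auto split: if_splits simp: top_unique)
  let ?J = "\<integral>x. \<bar>h x\<bar> powr q \<partial>M"
  have J: "0 \<le> ?J" by (intro integral_nonneg_AE) auto
  have "ennreal (?J powr (1/q)) \<le> ennreal B" using L int unfolding Lqn_def by simp
  then have "?J powr (1/q) \<le> B" using B by (simp add: ennreal_le_iff)
  then have "(?J powr (1/q)) powr q \<le> B powr q" using q by (intro powr_mono2) auto
  then have "?J \<le> B powr q" using q J by (simp add: powr_powr)
  moreover have "(\<integral>\<^sup>+x. ennreal (\<bar>h x\<bar> powr q) \<partial>M) = ennreal ?J"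
    by (rule nn_integral_eq_integral[OF int]) auto
  ultimately show ?thesis by (simp add: ennreal_leI)
qed

end

lemma young_pt:
  fixes x L p q :: real
  assumes "0 \<le> x" "0 < L" "0 < p" "p < q"
  shows "x powr p \<le> L powr (p - q) * x powr q + L powr p"
proof (cases "x \<le> L")
  case True
  then have "x powr p \<le> L powr p" using assms by (intro powr_mono2) auto
  moreover have "0 \<le> L powr (p - q) * x powr q" by simp
  ultimately show ?thesis by linarith
next
  case False
  then have x: "0 < x" "L < x" using assms by auto
  have "x powr p = x powr (p - q) * x powr q" using x by (simp add: powr_add[symmetric])
  also have "\<dots> \<le> L powr (p - q) * x powr q"
    using x assms by (intro mult_right_mono powr_mono2') auto
  finally have "x powr p \<le> L powr (p - q) * x powr q" .
  then show ?thesis using powr_ge_zero[of L p] by linarith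
qed

lemma pow_le_pt:
  fixes x m p q :: real
  assumes "0 \<le> x" "x \<le> m" "0 < p" "p \<le> q"
  shows "x powr q \<le> m powr (q - p) * x powr p"
proof (cases "x = 0")
  case True then show ?thesis using assms by simp
next
  case False
  then have x: "0 < x" using assms by auto
  have "x powr q = x powr (q - p) * x powr p" using x by (simp add: powr_add[symmetric])
  also have "\<dots> \<le> m powr (q - p) * x powr p"
    using x assms by (intro mult_right_mono powr_mono2) auto
  finally show ?thesis .
qed

lemma sum_pow_pt:
  fixes x y q :: real
  assumes "0 \<le> x" "0 \<le> y" "0 < q"
  shows "(x + y) powr q \<le> 2 powr q * (x powr q + y powr q)"
proof -
  have "(x + y) powr q \<le> (2 * max x y) powr q" using assms by (intro powr_mono2) auto
  also have "\<dots> = 2 powr q * max x y powr q" using assms by (simp add: powr_mult)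
  also have "max x y powr q \<le> x powr q + y powr q" by (simp add: max_def)
  finally show ?thesis by (simp add: mult_left_mono)
qed

lemma nni_affine:
  fixes F :: "real \<Rightarrow> real" and a b c d :: real
  assumes F: "F \<in> borel_measurable borel" "\<And>s. 0 \<le> F s" and c: "0 \<le> c" and d: "0 \<le> d" and ab: "a \<le> b"
  shows "(\<integral>\<^sup>+s. ennreal (c * F s + d) * indicator {a<..b} s \<partial>lborel) =
    ennreal c * (\<integral>\<^sup>+s. ennreal (F s) * indicator {a<..b} s \<partial>lborel) + ennreal (d * (b - a))"
proof -
  have "(\<integral>\<^sup>+s. ennreal (c * F s + d) * indicator {a<..b} s \<partial>lborel) =
     (\<integral>\<^sup>+s. ennreal c * (ennreal (F s) * indicator {a<..b} s) + ennreal d * indicator {a<..b} s \<partial>lborel)"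
    using F c d by (intro nn_integral_cong) (simp add: ennreal_plus ennreal_mult distrib_right mult.assoc)
  also have "\<dots> = (\<integral>\<^sup>+s. ennreal c * (ennreal (F s) * indicator {a<..b} s) \<partial>lborel) + (\<integral>\<^sup>+s. ennreal d * indicator {a<..b} s \<partial>lborel)"
    using F by (intro nn_integral_add) auto
  also have "(\<integral>\<^sup>+s. ennreal c * (ennreal (F s) * indicator {a<..b} s) \<partial>lborel) = ennreal c * (\<integral>\<^sup>+s. ennreal (F s) * indicator {a<..b} s \<partial>lborel)"
    using F by (intro nn_integral_cmult) auto
  also have "(\<integral>\<^sup>+s. ennreal d * indicator {a<..b} s \<partial>lborel) = ennreal (d * (b - a))"
    using nni_const[OF ab d] .
  finally show ?thesis .
qed

context prob_space
begin

definition clampf :: "real \<Rightarrow> ('a \<Rightarrow> real) \<Rightarrow> 'a \<Rightarrow> real" where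
  "clampf l f x = max (- l) (min l (f x))"

lemma clamp_abs: "0 \<le> l \<Longrightarrow> \<bar>clampf l f x\<bar> = min \<bar>f x\<bar> l"
  unfolding clampf_def by (auto simp: abs_if min_def max_def)

lemma rest_abs: "0 \<le> l \<Longrightarrow> \<bar>f x - clampf l f x\<bar> = max (\<bar>f x\<bar> - l) 0"
  unfolding clampf_def by (auto simp: abs_if min_def max_def)

lemma clamp_meas: assumes [measurable]: "f \<in> borel_measurable M" shows "clampf l f \<in> borel_measurable M"
  unfolding clampf_def by measurable

lemma Dm_clamp:
  assumes f: "f \<in> borel_measurable M" and l: "0 \<le> l"
  shows "Dm M (clampf l f) m \<le> Dm M f m" "Dm M (clampf l f) l = 0"
proof -
  show "Dm M (clampf l f) m \<le> Dm M f m" unfolding Dm_def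
    by (intro finite_measure_mono) (auto simp: clamp_abs[OF l] intro: Dm_sets f)
  have e: "{x \<in> space M. l < \<bar>clampf l f x\<bar>} = {}" by (auto simp: clamp_abs[OF l])
  show "Dm M (clampf l f) l = 0" unfolding Dm_def e by simp
qed

lemma Dm_rest:
  assumes f: "f \<in> borel_measurable M" and l: "0 \<le> l" and m: "0 \<le> m"
  shows "Dm M (\<lambda>x. f x - clampf l f x) m \<le> Dm M f m" "Dm M (\<lambda>x. f x - clampf l f x) m \<le> Dm M f l"
proof -
  show "Dm M (\<lambda>x. f x - clampf l f x) m \<le> Dm M f m" unfolding Dm_def
    using m l by (intro finite_measure_mono) (auto simp: rest_abs[OF l] intro: Dm_sets f)
  show "Dm M (\<lambda>x. f x - clampf l f x) m \<le> Dm M f l" unfolding Dm_def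
    using m l by (intro finite_measure_mono) (auto simp: rest_abs[OF l] intro: Dm_sets f)
qed

end

lemma ennreal_3: "(3::ennreal) = 1 + 1 + 1" by (simp only: numeral.simps)
lemma ennreal_x3: "x + (x + x) = 3 * (x::ennreal)"
  unfolding ennreal_3 by (simp only: distrib_right mult_1 add.assoc)

context prob_space
begin

lemma rrz_le_rr: "h \<in> borel_measurable M \<Longrightarrow> 0 < a \<Longrightarrow> a \<le> s \<Longrightarrow> rrz M h s \<le> rr M h a"
  unfolding rrz_def using rr_antimono by auto

lemma rrz_ge_rr: "h \<in> borel_measurable M \<Longrightarrow> 0 < s \<Longrightarrow> s \<le> b \<Longrightarrow> rr M h b \<le> rrz M h s"
  unfolding rrz_def using rr_antimono by auto

lemma upper_g1:
  assumes f: "f \<in> borel_measurable M" and u: "0 < u" "u < 1" and q: "0 < q"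
  shows "(\<integral>\<^sup>+x. ennreal (\<bar>clampf (rr M f u) f x\<bar> powr q) \<partial>M) \<le> 3 * NI f q (u/2) 1"
proof -
  let ?l = "rr M f u"
  let ?g = "clampf ?l f"
  have l: "0 \<le> ?l" using rr_basic(1)[OF f u(1)] .
  have g: "?g \<in> borel_measurable M" using clamp_meas[OF f] .
  have r1: "rr M ?g s \<le> rr M f s" if "0 < s" for s
    using rr_mono_D[OF g f that] Dm_clamp(1)[OF f l] by blast
  have r2: "rr M ?g s \<le> ?l" if "0 < s" for s
    using rr_le[OF l, of ?g s] Dm_clamp(2)[OF f l] that by simp
  have gm: "(\<lambda>y. ennreal (y powr q)) \<in> borel_measurable borel" by measurable
  have "(\<integral>\<^sup>+x. ennreal (\<bar>?g x\<bar> powr q) \<partial>M) = (\<integral>\<^sup>+s. ennreal (rrz M ?g s powr q) * indicator {0<..<1} s \<partial>lborel)"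
    using equimeas[OF g gm] by simp
  also have "\<dots> \<le> NI ?g q 0 1" unfolding NI_def
    by (intro nn_integral_mono) (auto simp: indicator_def)
  also have "\<dots> = NI ?g q 0 u + NI ?g q u 1" unfolding NI_def
    using u by (intro nni_split rrz_pow_meas g) auto
  also have "NI ?g q 0 u \<le> (\<integral>\<^sup>+s. ennreal (?l powr q) * indicator {0<..u} s \<partial>lborel)" unfolding NI_def
    using r2 rr_basic(1)[OF g] q by (intro nni_mono powr_mono2) (auto simp: rrz_def)
  also have "\<dots> = ennreal (?l powr q * u)" using u by (subst nni_const) auto
  also have "NI ?g q u 1 \<le> NI f q u 1" unfolding NI_def
    using r1 rr_basic(1)[OF g] q u by (intro nni_mono powr_mono2) (auto simp: rrz_def)
  also have "NI f q u 1 \<le> NI f q (u/2) 1" unfolding NI_def using u by (intro nni_sub_interval) auto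
  also have "ennreal (?l powr q * u) \<le> 2 * NI f q (u/2) 1"
  proof -
    have "ennreal (?l powr q * (u - u/2)) = (\<integral>\<^sup>+s. ennreal (?l powr q) * indicator {u/2<..u} s \<partial>lborel)"
      using u by (subst nni_const) auto
    also have "\<dots> \<le> NI f q (u/2) u" unfolding NI_def
      using rrz_ge_rr[OF f] l q u by (intro nni_mono powr_mono2) auto
    also have "\<dots> \<le> NI f q (u/2) 1" unfolding NI_def using u by (intro nni_sub_interval) auto
    finally have "ennreal (?l powr q * (u/2)) \<le> NI f q (u/2) 1" by simp
    then have "2 * ennreal (?l powr q * (u/2)) \<le> 2 * NI f q (u/2) 1" by (rule mult_left_mono) simp
    moreover have "2 * ennreal (?l powr q * (u/2)) = ennreal (?l powr q * u)"
      using ennreal_mult[of 2 "?l powr q * (u/2)"] u by simp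
    ultimately show ?thesis by simp
  qed
  finally show ?thesis by (simp add: mult_2 add.assoc ennreal_x3)
qed


lemma upper_g0:
  assumes f: "f \<in> borel_measurable M" and u: "0 < u" "u < 1" and p: "0 < p" "p < q"
    and L: "0 < L" and tau: "0 < \<tau>" "\<tau> < 1"
  shows "NI (\<lambda>x. f x - clampf (rr M f u) f x) p \<tau> 1 \<le> ennreal (L powr (p - q)) * NI f q \<tau> 1 + ennreal (L powr p * u)"
proof -
  let ?l = "rr M f u"
  let ?g = "\<lambda>x. f x - clampf ?l f x"
  have l: "0 \<le> ?l" "Dm M f ?l \<le> u" using rr_basic[OF f u(1)] by auto
  have g: "?g \<in> borel_measurable M" using clamp_meas[OF f] f by measurable
  have r1: "rr M ?g s \<le> rr M f s" if "0 < s" for s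
    using rr_mono_D[OF g f that] Dm_rest(1)[OF f l(1)] by blast
  have r0: "rr M ?g s = 0" if "u \<le> s" for s
  proof -
    have "Dm M ?g 0 \<le> s" using Dm_rest(2)[OF f l(1), of 0] l(2) that by simp
    then have "rr M ?g s \<le> 0" by (intro rr_le) auto
    then show ?thesis using rr_basic(1)[OF g, of s] u that by simp
  qed
  have z: "NI ?g p a 1 = 0" if "u \<le> a" for a
  proof -
    have "NI ?g p a 1 = (\<integral>\<^sup>+s. ennreal 0 * indicator {a<..1} s \<partial>lborel)" unfolding NI_def
      using r0 that p u by (intro nn_integral_cong) (auto simp: indicator_def rrz_def)
    then show ?thesis by simp
  qed
  have main: "NI ?g p \<tau> u \<le> ennreal (L powr (p - q)) * NI f q \<tau> u + ennreal (L powr p * (u - \<tau>))" if "\<tau> \<le> u"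
  proof -
    have "NI ?g p \<tau> u \<le> (\<integral>\<^sup>+s. ennreal (L powr (p - q) * rrz M f s powr q + L powr p) * indicator {\<tau><..u} s \<partial>lborel)"
      unfolding NI_def
    proof (intro nni_mono)
      fix s assume s: "\<tau> < s" "s \<le> u"
      have "rrz M ?g s powr p \<le> rrz M f s powr p"
        using s tau r1[of s] rr_basic(1)[OF g, of s] p unfolding rrz_def by (auto intro!: powr_mono2)
      also have "\<dots> \<le> L powr (p - q) * rrz M f s powr q + L powr p"
        using young_pt[OF rrz_nonneg[OF f] L p] .
      finally show "rrz M ?g s powr p \<le> L powr (p - q) * rrz M f s powr q + L powr p" .
    qed
    also have "\<dots> = ennreal (L powr (p - q)) * NI f q \<tau> u + ennreal (L powr p * (u - \<tau>))"
      unfolding NI_def using that by (intro nni_affine rrz_pow_meas f) auto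
    finally show ?thesis .
  qed
  show ?thesis
  proof (cases "u \<le> \<tau>")
    case True then show ?thesis using z by simp
  next
    case False
    then have "NI ?g p \<tau> 1 = NI ?g p \<tau> u + NI ?g p u 1" unfolding NI_def
      using u by (intro nni_split rrz_pow_meas g) auto
    also have "\<dots> = NI ?g p \<tau> u" using z[of u] by simp
    also have "\<dots> \<le> ennreal (L powr (p - q)) * NI f q \<tau> u + ennreal (L powr p * (u - \<tau>))"
      using main False by simp
    also have "\<dots> \<le> ennreal (L powr (p - q)) * NI f q \<tau> 1 + ennreal (L powr p * u)"
    proof -
      have "NI f q \<tau> u \<le> NI f q \<tau> 1" unfolding NI_def using u by (intro nni_sub_interval) auto
      moreover have "L powr p * (u - \<tau>) \<le> L powr p * u" using tau by (intro mult_left_mono) auto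
      ultimately show ?thesis using tau by (intro add_mono mult_left_mono ennreal_leI) auto
    qed
    finally show ?thesis .
  qed
qed

end

lemma ennreal_mult_add: fixes A B C :: real assumes "0 \<le> A" "0 \<le> B" "0 \<le> C"
  shows "ennreal (A * B + C) = ennreal A * ennreal B + ennreal C"
  using assms by (simp add: ennreal_mult)

lemma ln_eqI: "0 < (A::real) \<Longrightarrow> 0 < B \<Longrightarrow> ln A = ln B \<Longrightarrow> A = B"
  by simp

lemma powr_le_1_neg: "1 \<le> (x::real) \<Longrightarrow> e \<le> 0 \<Longrightarrow> x powr e \<le> 1"
  using powr_mono[of e 0 x] by simp

lemma algU1:
  fixes t K :: real
  assumes t: "0 < t" "t < 1" and K: "1 \<le> K"
  shows "1 - ln (t powr K / 2) \<le> (K + 1) * (1 - ln t)"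
proof -
  have "ln (t powr K / 2) = K * ln t - ln 2" using t by (simp add: ln_div ln_powr)
  moreover have "ln 2 < (1::real)" using ln_2_less_1 .
  moreover have "ln t < 0" using t by simp
  ultimately show ?thesis using K by (simp add: algebra_simps) 
qed

lemma algU2a:
  fixes a w u p q \<alpha> :: real
  assumes a: "0 < a" and w: "0 < w" and u: "0 < u" and p: "0 < p" "p < q"
  defines "L \<equiv> a * w powr (\<alpha>/q) * u powr (-1/q)"
  shows "L powr (p - q) * (a powr q * w powr \<alpha>) + L powr p * u = 2 * (a powr p * w powr (\<alpha>*p/q) * u powr ((q-p)/q))"
proof -
  have L: "0 < L" unfolding L_def using a w u by simp
  have e1: "L powr (p - q) * (a powr q * w powr \<alpha>) = a powr p * w powr (\<alpha>*p/q) * u powr ((q-p)/q)"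
    apply (rule ln_eqI)
    using a w u L p apply (auto)[2]
    using a w u p unfolding L_def
    apply (simp add: ln_mult ln_powr)
    apply (simp add: field_simps)
    done
  have e2: "L powr p * u = a powr p * w powr (\<alpha>*p/q) * u powr ((q-p)/q)"
    apply (rule ln_eqI)
    using a w u L p apply (auto)[2]
    using a w u p unfolding L_def
    apply (simp add: ln_mult ln_powr)
    apply (simp add: field_simps)
    done
  show ?thesis using e1 e2 by simp
qed

lemma algU2b:
  fixes a w u p q \<alpha> t I :: real
  assumes a: "0 < a" and w: "1 \<le> w" and t: "0 < t" and p: "1 < p" "p < q" and al: "0 < \<alpha>"
    and u: "u = t powr (p * q / (q - p))" and I: "0 \<le> I" "I \<le> 2 * (a powr p * w powr (\<alpha>*p/q) * u powr ((q-p)/q))"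
  shows "w powr (- \<alpha> / p) * I powr (1/p) \<le> 2 * a * t"
proof -
  let ?X = "a powr p * w powr (\<alpha>*p/q) * u powr ((q-p)/q)"
  have u0: "0 < u" using u t by simp
  have "I powr (1/p) \<le> (2 * ?X) powr (1/p)" using I p by (intro powr_mono2) auto
  then have "w powr (- \<alpha> / p) * I powr (1/p) \<le> w powr (- \<alpha> / p) * (2 * ?X) powr (1/p)"
    by (intro mult_left_mono) auto
  also have "w powr (- \<alpha> / p) * (2 * ?X) powr (1/p) = 2 powr (1/p) * a * t * w powr (\<alpha>/q - \<alpha>/p)"
    apply (rule ln_eqI)
    using a w u0 t p apply (auto)[2]
    using a w t p unfolding u
    apply (simp add: ln_mult ln_powr)
    apply (simp add: field_simps)
    done
  also have "\<dots> \<le> 2 * a * t * 1"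
  proof (intro mult_mono)
    show "2 powr (1/p) \<le> 2" using powr_mono[of "1/p" 1 2] p by simp
    show "w powr (\<alpha>/q - \<alpha>/p) \<le> 1" using w p al by (intro powr_le_1_neg) (auto simp: field_simps)
  qed (use a t in auto)
  finally show ?thesis by simp
qed

lemma algU3:
  fixes a W w K q \<alpha> :: real
  assumes a: "0 < a" and w: "1 \<le> w" and W: "1 \<le> W" "W \<le> (K + 1) * w" and q: "0 < q" and al: "0 < \<alpha>"
  shows "(3 * (a powr q * W powr \<alpha>)) powr (1/q) \<le> 3 powr (1/q) * (K + 1) powr (\<alpha>/q) * a * w powr (\<alpha>/q)"
proof -
  have K: "0 < K + 1" using W w by (smt (verit) mult_nonpos_nonneg)
  have "(3 * (a powr q * W powr \<alpha>)) powr (1/q) = 3 powr (1/q) * a * W powr (\<alpha>/q)"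
    using a W q by (simp add: powr_mult powr_powr)
  also have "\<dots> \<le> 3 powr (1/q) * a * ((K + 1) * w) powr (\<alpha>/q)"
    using W a q al by (intro mult_left_mono powr_mono2) auto
  also have "\<dots> = 3 powr (1/q) * (K + 1) powr (\<alpha>/q) * a * w powr (\<alpha>/q)"
    using K w by (simp add: powr_mult)
  finally show ?thesis .
qed


context prob_space
begin

lemma upper_t:
  assumes p: "1 < p" "p < q" and al: "0 < \<alpha>" and f: "f \<in> borel_measurable M"
    and G: "Gn M q \<alpha> f \<le> ennreal a" and a: "0 < a" and t: "0 < t" "t < 1"
  shows "ennreal (t powr (-1) * (1 - ln t) powr (- \<alpha> / q)) * Kn M (Gn M p \<alpha>) (Lqn M q) f t
     \<le> ennreal ((2 + 3 powr (1/q) * (p * q / (q - p) + 1) powr (\<alpha>/q)) * a)"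
proof -
  define K where "K = p * q / (q - p)"
  define C2 where "C2 = 3 powr (1/q) * (K + 1) powr (\<alpha>/q)"
  define u where "u = t powr K"
  define l where "l = rr M f u"
  define g1 where "g1 = clampf l f"
  define g0 where "g0 = (\<lambda>x. f x - clampf l f x)"
  define w where "w = 1 - ln t"
  have q: "0 < q" using p by simp
  have C2: "0 \<le> C2" unfolding C2_def by simp
  have K1: "1 \<le> K" unfolding K_def using p by (simp add: field_simps) (smt (verit) mult_le_cancel_right1 mult_nonneg_nonneg)
  have u: "0 < u" "u < 1" unfolding u_def using t K1 powr_le_one_le[of t K] by auto
  have w: "1 \<le> w" unfolding w_def using t by simp
  have g1m: "g1 \<in> borel_measurable M" unfolding g1_def using clamp_meas[OF f] .
  have g0m: "g0 \<in> borel_measurable M" unfolding g0_def using clamp_meas[OF f] f by measurable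
  have "(\<integral>\<^sup>+x. ennreal (\<bar>g1 x\<bar> powr q) \<partial>M) \<le> 3 * NI f q (u/2) 1"
    unfolding g1_def l_def using upper_g1[OF f u q] .
  also have "NI f q (u/2) 1 \<le> ennreal (a powr q * (1 - ln (u/2)) powr \<alpha>)"
    using Gn_le_D[OF f G, of "u/2"] a u q by auto
  finally have "(\<integral>\<^sup>+x. ennreal (\<bar>g1 x\<bar> powr q) \<partial>M) \<le> ennreal (3 * (a powr q * (1 - ln (u/2)) powr \<alpha>))"
    by (simp add: ennreal_mult mult_left_mono)
  then have "Lqn M q g1 \<le> ennreal ((3 * (a powr q * (1 - ln (u/2)) powr \<alpha>)) powr (1/q))"
    by (intro Lqn_le_I[OF g1m q]) auto
  also have "(3 * (a powr q * (1 - ln (u/2)) powr \<alpha>)) powr (1/q) \<le> C2 * a * w powr (\<alpha>/q)"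
    unfolding C2_def w_def
  proof (rule algU3[OF a])
    show "1 \<le> 1 - ln (u/2)" using u by simp
    show "1 - ln (u / 2) \<le> (K + 1) * (1 - ln t)" unfolding u_def using algU1[OF t K1] .
  qed (use t q al in auto)
  finally have Lq: "Lqn M q g1 \<le> ennreal (C2 * a * w powr (\<alpha>/q))" by (simp add: ennreal_leI)
  have Gp: "Gn M p \<alpha> g0 \<le> ennreal (2 * a * t)"
  proof (rule Gn_le_I)
    fix \<tau> :: real assume tau: "0 < \<tau>" "\<tau> < 1"
    define W where "W = 1 - ln \<tau>"
    have W: "1 \<le> W" unfolding W_def using tau by simp
    define L where "L = a * W powr (\<alpha>/q) * u powr (-1/q)"
    have L: "0 < L" unfolding L_def using a W u by simp
    let ?I = "LBINT s=\<tau>..1. rr M g0 s powr p"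
    have I: "NI g0 p \<tau> 1 = ennreal ?I" "0 \<le> ?I" using NI_LB[OF g0m, of \<tau> p] tau p by auto
    have "NI g0 p \<tau> 1 \<le> ennreal (L powr (p - q)) * NI f q \<tau> 1 + ennreal (L powr p * u)"
      unfolding g0_def l_def using upper_g0[OF f u _ p(2) L tau] p by simp
    also have "NI f q \<tau> 1 \<le> ennreal (a powr q * W powr \<alpha>)"
      unfolding W_def using Gn_le_D[OF f G _ tau q] a by simp
    finally have "ennreal ?I \<le> ennreal (L powr (p - q)) * ennreal (a powr q * W powr \<alpha>) + ennreal (L powr p * u)"
      using I by (simp add: mult_left_mono add_mono)
    also have "\<dots> = ennreal (L powr (p - q) * (a powr q * W powr \<alpha>) + L powr p * u)"
      using u by (intro ennreal_mult_add[symmetric]) auto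
    finally have "ennreal ?I \<le> ennreal (L powr (p - q) * (a powr q * W powr \<alpha>) + L powr p * u)" .
    then have "?I \<le> L powr (p - q) * (a powr q * W powr \<alpha>) + L powr p * u"
      using u by (subst (asm) ennreal_le_iff) auto
    also have "\<dots> = 2 * (a powr p * W powr (\<alpha>*p/q) * u powr ((q-p)/q))"
      unfolding L_def using algU2a[OF a _ u(1), of W p q \<alpha>] W p by simp
    finally have Ib: "?I \<le> 2 * (a powr p * W powr (\<alpha>*p/q) * u powr ((q-p)/q))" .
    have "W powr (- \<alpha> / p) * ?I powr (1/p) \<le> 2 * a * t"
      by (rule algU2b[OF a W t(1) p al u_def[unfolded K_def] I(2) Ib])
    then show "(1 - ln \<tau>) powr (- \<alpha> / p) * ?I powr (1 / p) \<le> 2 * a * t" unfolding W_def .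
  qed
  have "Kn M (Gn M p \<alpha>) (Lqn M q) f t \<le> Gn M p \<alpha> g0 + ennreal t * Lqn M q g1"
    unfolding Kn_def using g0m g1m
    by (intro INF_lower2[of "(g0, g1)"]) (auto simp: g0_def g1_def)
  also have "\<dots> \<le> ennreal (2 * a * t) + ennreal t * ennreal (C2 * a * w powr (\<alpha>/q))"
    using Gp Lq by (intro add_mono mult_left_mono) auto
  also have "\<dots> = ennreal (2 * a * t + t * (C2 * a * w powr (\<alpha>/q)))"
    using a t by (simp add: ennreal_mult ennreal_plus C2_def)
  finally have Kb: "Kn M (Gn M p \<alpha>) (Lqn M q) f t \<le> ennreal (2 * a * t + t * (C2 * a * w powr (\<alpha>/q)))" .
  have "ennreal (t powr (-1) * w powr (- \<alpha> / q)) * Kn M (Gn M p \<alpha>) (Lqn M q) f t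
     \<le> ennreal (t powr (-1) * w powr (- \<alpha> / q)) * ennreal (2 * a * t + t * (C2 * a * w powr (\<alpha>/q)))"
    using Kb by (rule mult_left_mono) simp
  also have "\<dots> = ennreal (t powr (-1) * w powr (- \<alpha> / q) * (2 * a * t + t * (C2 * a * w powr (\<alpha>/q))))"
    using a t C2 by (intro ennreal_mult[symmetric]) auto
  also have "t powr (-1) * w powr (- \<alpha> / q) * (2 * a * t + t * (C2 * a * w powr (\<alpha>/q))) \<le> (2 + C2) * a"
  proof -
    have "t powr (-1) * w powr (- \<alpha> / q) * (2 * a * t + t * (C2 * a * w powr (\<alpha>/q))) = 2 * a * w powr (- \<alpha> / q) + C2 * a"
      using t w by (simp add: powr_minus field_simps powr_add[symmetric])
    also have "\<dots> \<le> 2 * a * 1 + C2 * a"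
      using w a q al C2 by (intro add_mono mult_left_mono powr_le_1_neg) auto
    finally show ?thesis by (simp add: algebra_simps)
  qed
  finally show ?thesis unfolding w_def K_def C2_def by (simp add: ennreal_leI)
qed

end

lemma neg_mul_le: "0 < (e::real) \<Longrightarrow> - e * l \<le> e * (1 - l)"
  by (simp add: algebra_simps)

lemma algL_t:
  fixes \<tau> p q \<alpha> :: real
  assumes tau: "0 < \<tau>" "\<tau> < 1" and p: "1 < p" "p < q" and al: "0 < \<alpha>"
  defines "t \<equiv> \<tau> powr ((q - p) / (p * q)) * (1 - ln \<tau>) powr (- \<alpha> / p)"
  shows "0 < t" "t < 1" "1 - ln t \<le> (1 + (q - p) / (p * q) + \<alpha> / p) * (1 - ln \<tau>)"
proof -
  let ?W = "1 - ln \<tau>"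
  have W: "1 \<le> ?W" using tau by simp
  have e: "0 < (q - p) / (p * q)" using p by simp
  have W0: "?W \<noteq> 0" using W by linarith
  show t0: "0 < t" unfolding t_def using tau W0 by (intro mult_pos_pos) auto
  have "\<tau> powr ((q - p) / (p * q)) < 1"
  proof -
    have "ln \<tau> < 0" using tau by simp
    then have "((q - p) / (p * q)) * ln \<tau> < 0" by (intro mult_pos_neg e)
    then have "ln (\<tau> powr ((q - p) / (p * q))) < 0" using tau by (simp add: ln_powr)
    moreover have "0 < \<tau> powr ((q - p) / (p * q))" using tau by simp
    ultimately show ?thesis using ln_less_zero_iff by blast
  qed
  moreover have "?W powr (- \<alpha> / p) \<le> 1" using W al p by (intro powr_le_1_neg) auto
  ultimately show "t < 1" unfolding t_def
    using mult_left_mono[of "?W powr (- \<alpha> / p)" 1 "\<tau> powr ((q - p) / (p * q))"] by simp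
  have lt: "ln t = ((q - p) / (p * q)) * ln \<tau> - (\<alpha> / p) * ln ?W"
    unfolding t_def using tau W0 by (simp add: ln_mult ln_powr)
  have "ln ?W \<le> ?W - 1" using W by (intro ln_le_minus_one) auto
  then have "(\<alpha> / p) * ln ?W \<le> (\<alpha> / p) * (?W - 1)" using al p by (intro mult_left_mono) auto
  moreover have "- ((q - p) / (p * q)) * ln \<tau> \<le> ((q - p) / (p * q)) * ?W"
    using neg_mul_le[OF e, of "ln \<tau>"] .
  moreover have "0 \<le> (\<alpha> / p)" using al p by simp
  moreover have "(\<alpha> / p) * (?W - 1) = (\<alpha> / p) * ?W - \<alpha> / p" by (simp add: algebra_simps)
  moreover have "(1 + (q - p) / (p * q) + \<alpha> / p) * ?W = ?W + ((q - p) / (p * q)) * ?W + (\<alpha> / p) * ?W"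
    by (simp add: algebra_simps)
  moreover have "- ((q - p) / (p * q)) * ln \<tau> = - (((q - p) / (p * q)) * ln \<tau>)" by simp
  ultimately show "1 - ln t \<le> (1 + (q - p) / (p * q) + \<alpha> / p) * ?W"
    unfolding lt using W by linarith
qed

lemma algL_w:
  fixes \<tau> :: real assumes "0 < \<tau>" "\<tau> < 1"
  shows "1 \<le> 1 - ln (\<tau>/2)" "1 - ln (\<tau>/2) \<le> 2 * (1 - ln \<tau>)"
    "1 \<le> 1 - ln (\<tau>/4)" "1 - ln (\<tau>/4) \<le> 3 * (1 - ln \<tau>)"
proof -
  have l2: "ln 2 < (1::real)" using ln_2_less_1 .
  have l4: "ln 4 = 2 * ln (2::real)" using ln_powr[of 2 2] by simp
  have lt: "ln \<tau> < 0" using assms by simp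
  have "ln (\<tau>/2) < 0" using assms by simp
  then show "1 \<le> 1 - ln (\<tau>/2)" by simp
  have d2: "ln (\<tau>/2) = ln \<tau> - ln 2" using assms by (simp add: ln_div)
  show "1 - ln (\<tau>/2) \<le> 2 * (1 - ln \<tau>)" unfolding d2 using l2 lt by (smt (verit))
  have "ln (\<tau>/4) < 0" using assms by simp
  then show "1 \<le> 1 - ln (\<tau>/4)" by simp
  have d4: "ln (\<tau>/4) = ln \<tau> - ln 4" using assms by (simp add: ln_div)
  show "1 - ln (\<tau>/4) \<le> 3 * (1 - ln \<tau>)" unfolding d4 using l2 l4 lt by (smt (verit))
qed


lemma algL_S3:
  fixes \<tau> b p q \<alpha> W wt :: real
  assumes tau: "0 < \<tau>" and b: "0 < b" and p: "1 < p" "p < q" and W: "1 \<le> W" and wt: "1 \<le> wt"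
  shows "((4 / \<tau>) * ((2 * b * (\<tau> powr ((q - p) / (p * q)) * W powr (- \<alpha> / p)) * wt powr (\<alpha>/q)) powr p
           * (3 * W) powr \<alpha>)) powr ((q - p) / p)
         * (2 * b * (\<tau> powr ((q - p) / (p * q)) * W powr (- \<alpha> / p)) * wt powr (\<alpha>/q)) powr p * (2 * W) powr \<alpha>
       = (4 powr ((q - p) / p) * 3 powr (\<alpha> * (q - p) / p) * 2 powr \<alpha>) * (2 powr q * b powr q * wt powr \<alpha>)"
  apply (rule ln_eqI)
  using tau b W wt apply (auto)[2]
  using tau b W wt p
  apply (simp add: ln_mult ln_powr ln_div)
  apply (simp add: field_simps)
  done


lemma algL_main:
  fixes \<tau> b p q \<alpha> W wt w2 w4 m I :: real
  assumes tau: "0 < \<tau>" and b: "0 < b" and p: "1 < p" "p < q" and al: "0 < \<alpha>"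
    and W: "1 \<le> W" and wt: "1 \<le> wt" "wt \<le> C1 * W"
    and Bd: "B = 2 * b * (\<tau> powr ((q - p) / (p * q)) * W powr (- \<alpha> / p)) * wt powr (\<alpha>/q)"
    and m: "0 \<le> m" "m powr p \<le> (4 / \<tau>) * (B powr p * w4 powr \<alpha>)"
    and w4: "1 \<le> w4" "w4 \<le> 3 * W" and w2: "1 \<le> w2" "w2 \<le> 2 * W"
    and I: "0 \<le> I" "I \<le> 2 powr (q + 1) * (m powr (q - p) * (B powr p * w2 powr \<alpha>) + (2 * b * wt powr (\<alpha>/q)) powr q)"
  shows "W powr (- \<alpha> / q) * I powr (1 / q) \<le>
    (2 powr (2 * q + 1) * (4 powr ((q - p) / p) * 3 powr (\<alpha> * (q - p) / p) * 2 powr \<alpha> + 1) * C1 powr \<alpha>) powr (1 / q) * b"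
proof -
  define A0 where "A0 = 4 powr ((q - p) / p) * 3 powr (\<alpha> * (q - p) / p) * 2 powr \<alpha>"
  have A0: "0 \<le> A0" unfolding A0_def by simp
  have q: "0 < q" using p by simp
  have B: "0 < B" unfolding Bd using b tau W wt by simp
  have C1: "0 < C1" using wt W by (smt (verit) mult_nonpos_nonneg)
  have e: "0 < (q - p) / p" using p by simp
  have s1: "m powr (q - p) \<le> ((4 / \<tau>) * (B powr p * (3 * W) powr \<alpha>)) powr ((q - p) / p)"
  proof -
    have "m powr (q - p) = (m powr p) powr ((q - p) / p)" using p by (simp add: powr_powr)
    also have "\<dots> \<le> ((4 / \<tau>) * (B powr p * w4 powr \<alpha>)) powr ((q - p) / p)"
      using m e by (intro powr_mono2) auto
    also have "\<dots> \<le> ((4 / \<tau>) * (B powr p * (3 * W) powr \<alpha>)) powr ((q - p) / p)"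
      using e tau w4 al by (intro powr_mono2 mult_left_mono powr_mono2) auto
    finally show ?thesis .
  qed
  have s2: "m powr (q - p) * (B powr p * w2 powr \<alpha>) \<le> A0 * (2 powr q * b powr q * wt powr \<alpha>)"
  proof -
    have "m powr (q - p) * (B powr p * w2 powr \<alpha>) \<le>
       ((4 / \<tau>) * (B powr p * (3 * W) powr \<alpha>)) powr ((q - p) / p) * (B powr p * (2 * W) powr \<alpha>)"
      using s1 w2 al by (intro mult_mono mult_left_mono powr_mono2) auto
    also have "\<dots> = A0 * (2 powr q * b powr q * wt powr \<alpha>)"
      unfolding A0_def Bd using algL_S3[OF tau b p W wt(1), of \<alpha>] by (simp add: mult.assoc)
    finally show ?thesis .
  qed
  have s4: "(2 * b * wt powr (\<alpha>/q)) powr q = 2 powr q * b powr q * wt powr \<alpha>"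
    using b wt q by (simp add: powr_mult powr_powr)
  have "I \<le> 2 powr (q + 1) * (A0 * (2 powr q * b powr q * wt powr \<alpha>) + 2 powr q * b powr q * wt powr \<alpha>)"
    using I(2) s2 s4 by (smt (verit) mult_left_mono powr_ge_zero)
  also have "\<dots> = 2 powr (2 * q + 1) * (A0 + 1) * b powr q * wt powr \<alpha>"
    by (simp add: algebra_simps powr_add[symmetric])
  also have "\<dots> \<le> 2 powr (2 * q + 1) * (A0 + 1) * b powr q * (C1 * W) powr \<alpha>"
    using wt al A0 by (intro mult_left_mono powr_mono2) auto
  finally have I2: "I \<le> 2 powr (2 * q + 1) * (A0 + 1) * b powr q * (C1 * W) powr \<alpha>" .
  have "W powr (- \<alpha> / q) * I powr (1 / q) \<le> W powr (- \<alpha> / q) * (2 powr (2 * q + 1) * (A0 + 1) * b powr q * (C1 * W) powr \<alpha>) powr (1 / q)"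
    using I(1) I2 q by (intro mult_left_mono powr_mono2) auto
  also have "\<dots> = (2 powr (2 * q + 1) * (A0 + 1) * C1 powr \<alpha>) powr (1 / q) * b"
    apply (rule ln_eqI)
    using W b A0 C1 apply auto[2]
    using W b A0 C1 q apply (simp add: ln_mult ln_powr)
    apply (simp add: field_simps)
    done
  finally show ?thesis unfolding A0_def .
qed

context prob_space
begin

lemma lower_tau:
  assumes p: "1 < p" "p < q" and al: "0 < \<alpha>" and f: "f \<in> borel_measurable M"
    and Bh: "\<And>t. 0 < t \<Longrightarrow> t < 1 \<Longrightarrow>
       ennreal (t powr (-1) * (1 - ln t) powr (- \<alpha> / q)) * Kn M (Gn M p \<alpha>) (Lqn M q) f t \<le> ennreal b"
    and b: "0 < b" and tau: "0 < \<tau>" "\<tau> < 1"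
  shows "(1 - ln \<tau>) powr (- \<alpha> / q) * (LBINT s=\<tau>..1. rr M f s powr q) powr (1 / q) \<le>
    (2 powr (2 * q + 1) * (4 powr ((q - p) / p) * 3 powr (\<alpha> * (q - p) / p) * 2 powr \<alpha> + 1)
      * (1 + (q - p) / (p * q) + \<alpha> / p) powr \<alpha>) powr (1 / q) * b"
proof -
  define W where "W = 1 - ln \<tau>"
  define t where "t = \<tau> powr ((q - p) / (p * q)) * W powr (- \<alpha> / p)"
  define C1 where "C1 = 1 + (q - p) / (p * q) + \<alpha> / p"
  define wt where "wt = 1 - ln t"
  define B where "B = 2 * b * t * wt powr (\<alpha>/q)"
  have q: "0 < q" using p by simp
  have W: "1 \<le> W" unfolding W_def using tau by simp
  have t: "0 < t" "t < 1" "wt \<le> C1 * W"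
    using algL_t[OF tau p al] unfolding t_def W_def wt_def C1_def by auto
  have wt: "1 \<le> wt" unfolding wt_def using t by simp
  have B: "0 < B" unfolding B_def using b t wt by simp
  let ?c = "t powr (-1) * wt powr (- \<alpha> / q)"
  have c: "0 < ?c" using t wt by simp
  have K1: "ennreal ?c * Kn M (Gn M p \<alpha>) (Lqn M q) f t \<le> ennreal b" using Bh[OF t(1,2)] unfolding wt_def .
  have "Kn M (Gn M p \<alpha>) (Lqn M q) f t = ennreal (1 / ?c) * (ennreal ?c * Kn M (Gn M p \<alpha>) (Lqn M q) f t)"
  proof -
    have one: "ennreal (1 / ?c) * ennreal ?c = 1" using c by (subst ennreal_mult[symmetric]) auto
    then show ?thesis by (metis mult.assoc mult_1)
  qed
  also have "\<dots> \<le> ennreal (1 / ?c) * ennreal b" using K1 by (rule mult_left_mono) simp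
  also have "\<dots> = ennreal (b * t * wt powr (\<alpha>/q))"
    using c b t wt by (simp add: ennreal_mult[symmetric] powr_minus field_simps)
  also have "\<dots> < ennreal B" unfolding B_def using b t wt by (subst ennreal_less_iff) auto
  finally have "Kn M (Gn M p \<alpha>) (Lqn M q) f t < ennreal B" .
  then obtain gs where gs: "gs \<in> {(g0, g1). g0 \<in> borel_measurable M \<and> g1 \<in> borel_measurable M
                     \<and> (\<forall>x\<in>space M. f x = g0 x + g1 x)}"
    and gslt: "Gn M p \<alpha> (fst gs) + ennreal t * Lqn M q (snd gs) < ennreal B"
    unfolding Kn_def INF_less_iff by blast
  obtain g0 g1 where gs_eq: "gs = (g0, g1)" by (cases gs)
  have g0: "g0 \<in> borel_measurable M" and g1: "g1 \<in> borel_measurable M"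
    and dec: "\<forall>x\<in>space M. f x = g0 x + g1 x" using gs unfolding gs_eq by auto
  have lt: "Gn M p \<alpha> g0 + ennreal t * Lqn M q g1 < ennreal B" using gslt unfolding gs_eq by simp
  have "Gn M p \<alpha> g0 \<le> Gn M p \<alpha> g0 + ennreal t * Lqn M q g1" by (rule add_increasing2) auto
  then have Gg0: "Gn M p \<alpha> g0 \<le> ennreal B" using order.trans less_imp_le[OF lt] by blast
  have "ennreal t * Lqn M q g1 \<le> Gn M p \<alpha> g0 + ennreal t * Lqn M q g1" by (rule add_increasing) auto
  then have tL: "ennreal t * Lqn M q g1 \<le> ennreal B" using order.trans less_imp_le[OF lt] by blast
  obtain L1 where L1: "Lqn M q g1 = ennreal L1" "0 \<le> L1"
  proof (cases "integrable M (\<lambda>x. \<bar>g1 x\<bar> powr q)")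
    case True then show ?thesis using that unfolding Lqn_def by auto
  next
    case False
    then have "ennreal t * Lqn M q g1 = \<infinity>" using t unfolding Lqn_def by (simp add: ennreal_mult_top)
    then show ?thesis using lt by simp
  qed
  have "ennreal (t * L1) \<le> ennreal B" using tL L1 t by (simp add: ennreal_mult)
  then have "t * L1 \<le> B" using B by (simp add: ennreal_le_iff)
  then have "L1 \<le> 2 * b * wt powr (\<alpha>/q)" unfolding B_def using t by (simp add: field_simps)
  then have "Lqn M q g1 \<le> ennreal (2 * b * wt powr (\<alpha>/q))" using L1 by (simp add: ennreal_leI)
  from Lqn_le_D[OF g1 q this] b
  have g1int: "(\<integral>\<^sup>+x. ennreal (\<bar>g1 x\<bar> powr q) \<partial>M) \<le> ennreal ((2 * b * wt powr (\<alpha>/q)) powr q)" by simp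
  have Gd: "NI g0 p \<sigma> 1 \<le> ennreal (B powr p * (1 - ln \<sigma>) powr \<alpha>)" if "0 < \<sigma>" "\<sigma> < 1" for \<sigma>
    using Gn_le_D[OF g0 Gg0 _ that] B p by simp
  define m where "m = rr M g0 (\<tau>/2)"
  have m0: "0 \<le> m" unfolding m_def using rr_basic(1)[OF g0] tau by simp
  have w4: "1 \<le> 1 - ln (\<tau>/4)" "1 - ln (\<tau>/4) \<le> 3 * W" and w2: "1 \<le> 1 - ln (\<tau>/2)" "1 - ln (\<tau>/2) \<le> 2 * W"
    using algL_w[OF tau] unfolding W_def by auto
  have "ennreal (m powr p * (\<tau>/2 - \<tau>/4)) = (\<integral>\<^sup>+s. ennreal (m powr p) * indicator {\<tau>/4<..\<tau>/2} s \<partial>lborel)"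
    using tau by (subst nni_const) auto
  also have "\<dots> \<le> NI g0 p (\<tau>/4) (\<tau>/2)" unfolding NI_def m_def
    using rrz_ge_rr[OF g0] m0 p tau unfolding m_def by (intro nni_mono powr_mono2) auto
  also have "\<dots> \<le> NI g0 p (\<tau>/4) 1" unfolding NI_def using tau by (intro nni_sub_interval) auto
  also have "\<dots> \<le> ennreal (B powr p * (1 - ln (\<tau>/4)) powr \<alpha>)" using Gd tau by simp
  finally have "m powr p * (\<tau>/4) \<le> B powr p * (1 - ln (\<tau>/4)) powr \<alpha>"
    by (subst (asm) ennreal_le_iff) (auto simp: field_simps)
  then have mb: "m powr p \<le> (4 / \<tau>) * (B powr p * (1 - ln (\<tau>/4)) powr \<alpha>)"
    using tau by (simp add: field_simps)
  let ?F0 = "\<lambda>s. rrz M g0 s powr q" and ?F1 = "\<lambda>s. rrz M g1 s powr q"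
  have F0m: "?F0 \<in> borel_measurable borel" using rrz_pow_meas[OF g0] .
  have F1m: "?F1 \<in> borel_measurable borel" using rrz_pow_meas[OF g1] .
  have F0m': "(\<lambda>s. ?F0 (s/2)) \<in> borel_measurable borel" using F0m by measurable
  have F1m': "(\<lambda>s. ?F1 (s/2)) \<in> borel_measurable borel" using F1m by measurable
  have absf: "\<And>x. x \<in> space M \<Longrightarrow> \<bar>f x\<bar> \<le> \<bar>g0 x\<bar> + \<bar>g1 x\<bar>" using dec by auto
  have "NI f q \<tau> 1 \<le> (\<integral>\<^sup>+s. ennreal (2 powr q * (?F0 (s/2) + ?F1 (s/2))) * indicator {\<tau><..1} s \<partial>lborel)"
    unfolding NI_def
  proof (intro nni_mono)
    fix s assume s: "\<tau> < s" "s \<le> 1"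
    then have s0: "0 < s" using tau by simp
    have "rrz M f s \<le> rrz M g0 (s/2) + rrz M g1 (s/2)"
      using rr_sub[OF f g0 g1 s0 absf] s0 unfolding rrz_def by simp
    then have "rrz M f s powr q \<le> (rrz M g0 (s/2) + rrz M g1 (s/2)) powr q"
      using q rrz_nonneg[OF f] by (intro powr_mono2) auto
    also have "\<dots> \<le> 2 powr q * (?F0 (s/2) + ?F1 (s/2))"
      by (rule sum_pow_pt[OF rrz_nonneg[OF g0] rrz_nonneg[OF g1] q])
    finally show "rrz M f s powr q \<le> 2 powr q * (?F0 (s/2) + ?F1 (s/2))" .
  qed
  also have "\<dots> = ennreal (2 powr q) * ((\<integral>\<^sup>+s. ennreal (?F0 (s/2)) * indicator {\<tau><..1} s \<partial>lborel)
       + (\<integral>\<^sup>+s. ennreal (?F1 (s/2)) * indicator {\<tau><..1} s \<partial>lborel))"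
  proof -
    have "(\<integral>\<^sup>+s. ennreal (2 powr q * (?F0 (s/2) + ?F1 (s/2))) * indicator {\<tau><..1} s \<partial>lborel)
       = (\<integral>\<^sup>+s. ennreal (2 powr q) * (ennreal (?F0 (s/2) + ?F1 (s/2)) * indicator {\<tau><..1} s) \<partial>lborel)"
      by (intro nn_integral_cong) (simp add: ennreal_mult mult.assoc)
    also have "\<dots> = ennreal (2 powr q) * (\<integral>\<^sup>+s. ennreal (?F0 (s/2) + ?F1 (s/2)) * indicator {\<tau><..1} s \<partial>lborel)"
      using F0m' F1m' by (intro nn_integral_cmult) auto
    also have "(\<integral>\<^sup>+s. ennreal (?F0 (s/2) + ?F1 (s/2)) * indicator {\<tau><..1} s \<partial>lborel) =
       (\<integral>\<^sup>+s. ennreal (?F0 (s/2)) * indicator {\<tau><..1} s \<partial>lborel) + (\<integral>\<^sup>+s. ennreal (?F1 (s/2)) * indicator {\<tau><..1} s \<partial>lborel)"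
      by (rule nni_add[OF _ F0m' F1m']) auto
    finally show ?thesis .
  qed
  also have "(\<integral>\<^sup>+s. ennreal (?F0 (s/2)) * indicator {\<tau><..1} s \<partial>lborel) = 2 * NI g0 q (\<tau>/2) (1/2)"
    unfolding NI_def using nni_scale[OF F0m, of \<tau> 1] by simp
  also have "(\<integral>\<^sup>+s. ennreal (?F1 (s/2)) * indicator {\<tau><..1} s \<partial>lborel) = 2 * NI g1 q (\<tau>/2) (1/2)"
    unfolding NI_def using nni_scale[OF F1m, of \<tau> 1] by simp
  finally have A: "NI f q \<tau> 1 \<le> ennreal (2 powr q) * (2 * NI g0 q (\<tau>/2) (1/2) + 2 * NI g1 q (\<tau>/2) (1/2))" .
  have X1: "NI g1 q (\<tau>/2) (1/2) \<le> ennreal ((2 * b * wt powr (\<alpha>/q)) powr q)"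
  proof -
    have gm: "(\<lambda>y. ennreal (y powr q)) \<in> borel_measurable borel" by measurable
    have "NI g1 q (\<tau>/2) (1/2) \<le> (\<integral>\<^sup>+s. ennreal (rrz M g1 s powr q) * indicator {0<..<1} s \<partial>lborel)"
      unfolding NI_def using tau by (intro nn_integral_mono) (auto simp: indicator_def)
    also have "\<dots> = (\<integral>\<^sup>+x. ennreal (\<bar>g1 x\<bar> powr q) \<partial>M)" using equimeas[OF g1 gm] by simp
    finally show ?thesis using g1int by simp
  qed
  have X0: "NI g0 q (\<tau>/2) (1/2) \<le> ennreal (m powr (q - p) * (B powr p * (1 - ln (\<tau>/2)) powr \<alpha>))"
  proof -
    have "NI g0 q (\<tau>/2) (1/2) \<le> (\<integral>\<^sup>+s. ennreal (m powr (q - p) * rrz M g0 s powr p + 0) * indicator {\<tau>/2<..1/2} s \<partial>lborel)"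
      unfolding NI_def
    proof (intro nni_mono)
      fix s assume s: "\<tau>/2 < s" "s \<le> 1/2"
      have "rrz M g0 s \<le> m" unfolding m_def using rrz_le_rr[OF g0, of "\<tau>/2" s] tau s by simp
      then show "rrz M g0 s powr q \<le> m powr (q - p) * rrz M g0 s powr p + 0"
        using pow_le_pt[OF rrz_nonneg[OF g0]] p by simp
    qed
    also have "\<dots> = ennreal (m powr (q - p)) * NI g0 p (\<tau>/2) (1/2) + ennreal (0 * (1/2 - \<tau>/2))"
      unfolding NI_def using tau by (intro nni_affine rrz_pow_meas g0) auto
    also have "NI g0 p (\<tau>/2) (1/2) \<le> NI g0 p (\<tau>/2) 1" unfolding NI_def by (intro nni_sub_interval) auto
    also have "\<dots> \<le> ennreal (B powr p * (1 - ln (\<tau>/2)) powr \<alpha>)" using Gd tau by simp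
    finally show ?thesis by (simp add: ennreal_mult mult_left_mono)
  qed
  let ?X0 = "m powr (q - p) * (B powr p * (1 - ln (\<tau>/2)) powr \<alpha>)"
  let ?X1 = "(2 * b * wt powr (\<alpha>/q)) powr q"
  have "NI f q \<tau> 1 \<le> ennreal (2 powr q) * (2 * ennreal ?X0 + 2 * ennreal ?X1)"
    using A X0 X1 by (meson add_mono mult_left_mono order.trans zero_le)
  also have "\<dots> = ennreal (2 powr (q + 1) * (?X0 + ?X1))"
  proof -
    have "ennreal (2 powr q) * (2 * ennreal ?X0 + 2 * ennreal ?X1) = ennreal (2 powr q * (2 * ?X0 + 2 * ?X1))"
      by (simp add: ennreal_mult ennreal_plus)
    also have "2 powr q * (2 * ?X0 + 2 * ?X1) = 2 powr (q + 1) * (?X0 + ?X1)"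
      by (simp add: powr_add algebra_simps)
    finally show ?thesis .
  qed
  finally have NIb: "NI f q \<tau> 1 \<le> ennreal (2 powr (q + 1) * (?X0 + ?X1))" .
  have I: "NI f q \<tau> 1 = ennreal (LBINT s=\<tau>..1. rr M f s powr q)" "0 \<le> (LBINT s=\<tau>..1. rr M f s powr q)"
    using NI_LB[OF f, of \<tau> q] tau q by auto
  have Ib: "(LBINT s=\<tau>..1. rr M f s powr q) \<le> 2 powr (q + 1) * (m powr (q - p) * (B powr p * (1 - ln (\<tau>/2)) powr \<alpha>) + (2 * b * wt powr (\<alpha>/q)) powr q)"
  proof -
    have R0: "0 \<le> 2 powr (q + 1) * (?X0 + ?X1)" by simp
    have "ennreal (LBINT s=\<tau>..1. rr M f s powr q) \<le> ennreal (2 powr (q + 1) * (?X0 + ?X1))"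
      using NIb I(1) by simp
    then show ?thesis using ennreal_le_iff[OF R0] by blast
  qed
  show ?thesis unfolding W_def[symmetric]
    by (rule algL_main[OF tau(1) b p al W wt t(3) B_def[unfolded t_def] m0 mb w4 w2 I(2) Ib, unfolded C1_def])
qed

end

context prob_space
begin

lemma upper_all:
  assumes p: "1 < p" "p < q" and al: "0 < \<alpha>" and f: "f \<in> borel_measurable M"
  shows "interp_norm_inf 1 (- \<alpha> / q) (Kn M (Gn M p \<alpha>) (Lqn M q) f)
    \<le> ennreal (2 + 3 powr (1/q) * (p * q / (q - p) + 1) powr (\<alpha>/q)) * Gn M q \<alpha> f"
proof -
  define Cu where "Cu = 2 + 3 powr (1/q) * (p * q / (q - p) + 1) powr (\<alpha>/q)"
  have Cu: "0 < Cu" unfolding Cu_def by (smt (verit) mult_nonneg_nonneg powr_ge_zero)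
  have "interp_norm_inf 1 (- \<alpha> / q) (Kn M (Gn M p \<alpha>) (Lqn M q) f) \<le> ennreal Cu * Gn M q \<alpha> f"
  proof (cases "Gn M q \<alpha> f = \<infinity>")
    case True then show ?thesis using Cu by simp
  next
    case False
    then obtain A where A: "Gn M q \<alpha> f = ennreal A" "0 \<le> A"
      by (cases "Gn M q \<alpha> f" rule: ennreal_cases) auto
    have "interp_norm_inf 1 (- \<alpha> / q) (Kn M (Gn M p \<alpha>) (Lqn M q) f) \<le> ennreal (Cu * A)"
    proof (rule ennreal_le_epsilon)
      fix e :: real assume e: "0 < e"
      define a where "a = A + e / Cu"
      have "0 < e / Cu" using e Cu by simp
      then have a: "0 < a" unfolding a_def using A(2) by linarith
      have G: "Gn M q \<alpha> f \<le> ennreal a" unfolding A(1) a_def using \<open>0 < e / Cu\<close> by (intro ennreal_leI) simp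
      have "interp_norm_inf 1 (- \<alpha> / q) (Kn M (Gn M p \<alpha>) (Lqn M q) f) \<le> ennreal (Cu * a)"
        unfolding interp_norm_inf_def
      proof (intro SUP_least)
        fix t :: real assume "t \<in> {0<..<1}"
        then have t: "0 < t" "t < 1" by auto
        from upper_t[OF p al f G a t]
        show "ennreal (t powr (- 1) * (1 - ln t) powr (- \<alpha> / q)) * Kn M (Gn M p \<alpha>) (Lqn M q) f t \<le> ennreal (Cu * a)"
          unfolding Cu_def .
      qed
      also have "ennreal (Cu * a) = ennreal (Cu * A) + ennreal e"
      proof -
        have "Cu * a = Cu * A + e" unfolding a_def using Cu by (simp add: field_simps)
        then show ?thesis using Cu A e by (simp add: ennreal_plus)
      qed
      finally show "interp_norm_inf 1 (- \<alpha> / q) (Kn M (Gn M p \<alpha>) (Lqn M q) f) \<le> ennreal (Cu * A) + ennreal e" .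
    qed
    then show ?thesis unfolding A(1) using Cu A by (simp add: ennreal_mult)
  qed
  then show ?thesis unfolding Cu_def .
qed


lemma lower_all:
  assumes p: "1 < p" "p < q" and al: "0 < \<alpha>" and f: "f \<in> borel_measurable M"
  shows "Gn M q \<alpha> f \<le> ennreal ((2 powr (2 * q + 1) * (4 powr ((q - p) / p) * 3 powr (\<alpha> * (q - p) / p) * 2 powr \<alpha> + 1)
      * (1 + (q - p) / (p * q) + \<alpha> / p) powr \<alpha>) powr (1 / q)) * interp_norm_inf 1 (- \<alpha> / q) (Kn M (Gn M p \<alpha>) (Lqn M q) f)"
proof -
  define Cl where "Cl = (2 powr (2 * q + 1) * (4 powr ((q - p) / p) * 3 powr (\<alpha> * (q - p) / p) * 2 powr \<alpha> + 1)
      * (1 + (q - p) / (p * q) + \<alpha> / p) powr \<alpha>) powr (1 / q)"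
  define IN where "IN = interp_norm_inf 1 (- \<alpha> / q) (Kn M (Gn M p \<alpha>) (Lqn M q) f)"
  have q: "0 < q" using p by simp
  have C1: "0 < 1 + (q - p) / (p * q) + \<alpha> / p" using p al by (smt (verit) divide_pos_pos mult_pos_pos)
  have A0: "0 \<le> 4 powr ((q - p) / p) * 3 powr (\<alpha> * (q - p) / p) * 2 powr \<alpha>" by simp
  have A1: "4 powr ((q - p) / p) * 3 powr (\<alpha> * (q - p) / p) * 2 powr \<alpha> + 1 \<noteq> 0" using A0 by linarith
  have Cl: "0 < Cl" unfolding Cl_def using C1 A1 by simp
  have "Gn M q \<alpha> f \<le> ennreal Cl * IN"
  proof (cases "IN = \<infinity>")
    case True then show ?thesis using Cl by simp
  next
    case False
    then obtain B where B: "IN = ennreal B" "0 \<le> B"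
      by (cases IN rule: ennreal_cases) auto
    have "Gn M q \<alpha> f \<le> ennreal (Cl * B)"
    proof (rule ennreal_le_epsilon)
      fix e :: real assume e: "0 < e"
      define b where "b = B + e / Cl"
      have "0 < e / Cl" using e Cl by simp
      then have b: "0 < b" unfolding b_def using B(2) by linarith
      have Bh: "ennreal (t powr (-1) * (1 - ln t) powr (- \<alpha> / q)) * Kn M (Gn M p \<alpha>) (Lqn M q) f t \<le> ennreal b"
        if t: "0 < t" "t < 1" for t
      proof -
        have "ennreal (t powr (-1) * (1 - ln t) powr (- \<alpha> / q)) * Kn M (Gn M p \<alpha>) (Lqn M q) f t \<le> IN"
          unfolding IN_def interp_norm_inf_def using t by (intro SUP_upper2[of t]) auto
        also have "IN \<le> ennreal b" unfolding B(1) b_def using \<open>0 < e / Cl\<close> by (intro ennreal_leI) simp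
        finally show ?thesis .
      qed
      have "Gn M q \<alpha> f \<le> ennreal (Cl * b)"
      proof (rule Gn_le_I)
        fix \<tau> :: real assume tau: "0 < \<tau>" "\<tau> < 1"
        from lower_tau[OF p al f Bh b tau]
        show "(1 - ln \<tau>) powr (- \<alpha> / q) * (LBINT s=\<tau>..1. rr M f s powr q) powr (1 / q) \<le> Cl * b"
          unfolding Cl_def .
      qed
      also have "ennreal (Cl * b) = ennreal (Cl * B) + ennreal e"
      proof -
        have "Cl * b = Cl * B + e" unfolding b_def using Cl by (simp add: field_simps)
        then show ?thesis using Cl B e by (simp add: ennreal_plus)
      qed
      finally show "Gn M q \<alpha> f \<le> ennreal (Cl * B) + ennreal e" .
    qed
    then show ?thesis unfolding B(1) using Cl B by (simp add: ennreal_mult)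
  qed
  then show ?thesis unfolding Cl_def IN_def .
qed

theorem main_abs:
  assumes p: "1 < p" "p < q" and al: "0 < \<alpha>"
  shows "\<exists>c::real. 1 \<le> c \<and>
    (\<forall>f \<in> borel_measurable M.
       ennreal (1 / c) * Gn M q \<alpha> f
         \<le> interp_norm_inf 1 (- \<alpha> / q) (Kn M (Gn M p \<alpha>) (Lqn M q) f)
     \<and> interp_norm_inf 1 (- \<alpha> / q) (Kn M (Gn M p \<alpha>) (Lqn M q) f)
         \<le> ennreal c * Gn M q \<alpha> f)"
proof -
  define Cu where "Cu = 2 + 3 powr (1/q) * (p * q / (q - p) + 1) powr (\<alpha>/q)"
  define Cl where "Cl = (2 powr (2 * q + 1) * (4 powr ((q - p) / p) * 3 powr (\<alpha> * (q - p) / p) * 2 powr \<alpha> + 1)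
      * (1 + (q - p) / (p * q) + \<alpha> / p) powr \<alpha>) powr (1 / q)"
  define c where "c = max 1 (max Cu Cl)"
  have c1: "1 \<le> c" unfolding c_def by simp
  have cu: "Cu \<le> c" and cl: "Cl \<le> c" unfolding c_def by auto
  have Cl0: "0 \<le> Cl" unfolding Cl_def by simp
  show ?thesis
  proof (intro exI[of _ c] conjI c1 ballI)
    fix f :: "'a \<Rightarrow> real" assume f: "f \<in> borel_measurable M"
    let ?IN = "interp_norm_inf 1 (- \<alpha> / q) (Kn M (Gn M p \<alpha>) (Lqn M q) f)"
    have "?IN \<le> ennreal Cu * Gn M q \<alpha> f" using upper_all[OF p al f] unfolding Cu_def .
    also have "\<dots> \<le> ennreal c * Gn M q \<alpha> f" using cu by (intro mult_right_mono ennreal_leI) auto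
    finally show "?IN \<le> ennreal c * Gn M q \<alpha> f" .
    have "ennreal (1 / c) * Gn M q \<alpha> f \<le> ennreal (1 / c) * (ennreal Cl * ?IN)"
      using lower_all[OF p al f] unfolding Cl_def by (rule mult_left_mono) simp
    also have "\<dots> = ennreal (Cl / c) * ?IN" using c1 Cl0 by (simp add: ennreal_mult[symmetric] mult.assoc[symmetric])
    also have "\<dots> \<le> ennreal 1 * ?IN" using c1 cl Cl0 by (intro mult_right_mono ennreal_leI) auto
    finally show "ennreal (1 / c) * Gn M q \<alpha> f \<le> ?IN" by simp
  qed
qed

end

lemma final:
  fixes \<Omega> :: "'a::euclidean_space set" and p q \<alpha> :: real
  assumes "bounded \<Omega>" and "open \<Omega>" and "measure lebesgue \<Omega> = 1"
    and "1 < p" and "p < q" and "0 < \<alpha>"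
  shows "\<exists>c::real. 1 \<le> c \<and>
    (\<forall>f \<in> borel_measurable (lebesgue_on \<Omega>).
       ennreal (1 / c) * grand_norm \<Omega> q \<alpha> f
         \<le> interp_norm_inf 1 (- \<alpha> / q) (K_fun \<Omega> (grand_norm \<Omega> p \<alpha>) (Lq_norm \<Omega> q) f)
     \<and> interp_norm_inf 1 (- \<alpha> / q) (K_fun \<Omega> (grand_norm \<Omega> p \<alpha>) (Lq_norm \<Omega> q) f)
         \<le> ennreal c * grand_norm \<Omega> q \<alpha> f)"
proof -
  have S: "\<Omega> \<in> sets lebesgue" using assms(2) by auto
  have fm: "\<Omega> \<in> lmeasurable" using bounded_set_imp_lmeasurable[OF assms(1) S] .
  have e1: "emeasure lebesgue \<Omega> = 1"
    using fm assms(3) by (simp add: emeasure_eq_measure2)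
  have P: "prob_space (lebesgue_on \<Omega>)"
    by (rule prob_spaceI) (simp add: emeasure_restrict_space S e1)
  have G: "grand_norm \<Omega> r \<alpha> = Gn (lebesgue_on \<Omega>) r \<alpha>" for r using bridge(2)[OF S] by (intro ext) 
  have L: "Lq_norm \<Omega> q = Lqn (lebesgue_on \<Omega>) q" using bridge(3)[OF S] by (intro ext)
  have K: "K_fun \<Omega> N0 N1 h = Kn (lebesgue_on \<Omega>) N0 N1 h" for N0 N1 h using bridge(4)[OF S] by (intro ext)
  show ?thesis unfolding G L K using prob_space.main_abs[OF P assms(4,5,6)] .
qed

theorem theorem1p1:
  fixes \<Omega> :: "'a::euclidean_space set" and p q \<alpha> :: real
  assumes "bounded \<Omega>" and "open \<Omega>" and "measure lebesgue \<Omega> = 1"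
    and "1 < p" and "p < q" and "0 < \<alpha>"
  shows "\<exists>c::real. 1 \<le> c \<and>
    (\<forall>f \<in> borel_measurable (lebesgue_on \<Omega>).
       ennreal (1 / c) * grand_norm \<Omega> q \<alpha> f
         \<le> interp_norm_inf 1 (- \<alpha> / q) (K_fun \<Omega> (grand_norm \<Omega> p \<alpha>) (Lq_norm \<Omega> q) f)
     \<and> interp_norm_inf 1 (- \<alpha> / q) (K_fun \<Omega> (grand_norm \<Omega> p \<alpha>) (Lq_norm \<Omega> q) f)
         \<le> ennreal c * grand_norm \<Omega> q \<alpha> f)"
  using final[OF assms] .

end
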